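(* Let $\ell\geq 2$ and let $\Lambda_1\subsetneq\Lambda_2\subsetneq\cdots$ be a strictly increasing sequence of finite subsets of $\mathbb{Z}^d$ such that each $\Lambda_n$ and each $\Lambda_n\setminus\Lambda_{n-\ell}$ (for $n>\ell$) is connected (as a subgraph of the nearest-neighbor graph of $\mathbb{Z}^d$). For $n$ with $n+1-\ell\geq 1$, set $E_n=G^{\Lambda_n}-G^{\Lambda_{n+1}}$ (an orthogonal projection on $\mathcal{H}_{\Lambda_{n+1}}$). Then, for the PVBS model, $$\big\|G^{\Lambda_{n+1}\setminus\Lambda_{n+1-\ell}}E_n\big\|^2=\frac{C(\Lambda_{n+1-\ell})\,C(\Lambda_{n+1}\setminus\Lambda_n)}{C(\Lambda_n)\,C(\Lambda_{n+1}\setminus\Lambda_{n+1-\ell})}.$$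
   Context: Model (single-species PVBS model) with parameters $\lambda_1,\ldots,\lambda_d\in(0,\infty)$: each site of $\mathbb{Z}^d$ carries $\mathbb{C}^2$ with orthonormal basis $|0\rangle,|1\rangle$, $\mathcal{H}_\Lambda=\bigotimes_{x\in\Lambda}\mathbb{C}^2$; with $\phi^{(\lambda)}=(|01\rangle-\lambda|10\rangle)/\sqrt{1+\lambda^2}$ on the pair $(x,x+e_j)$ (first factor at $x$), $h_{x,x+e_j}=|\phi^{(\lambda_j)}\rangle\langle\phi^{(\lambda_j)}|+|11\rangle\langle11|$ and $H^\Lambda=\sum_{j=1}^d\sum_{x:\,x,x+e_j\in\Lambda}h_{x,x+e_j}$ for finite $\Lambda$. Write $\lambda^x=\prod_j\lambda_j^{x_j}$. For finite $\Lambda\subset\mathbb{Z}^d$, $C(\Lambda)=\sum_{x\in\Lambda}\lambda^{2x}$ (with $C(\emptyset)=0$). $G^\Lambda$ denotes the orthogonal projection onto $\ker H^\Lambda$, regarded as an operator on $\mathcal{H}_{\Lambda'}$ for any finite $\Lambda'\supseteq\Lambda$ by tensoring with the identity on $\mathcal{H}_{\Lambda'\setminus\Lambda}$. (For connected finite $\Lambda$, $\ker H^\Lambda$ is spanned by $\otimes_{x\in\Lambda}|0\rangle$ and $C(\Lambda)^{-1/2}\sum_{x\in\Lambda}\lambda^x\sigma^1_x\otimes_{y\in\Lambda}|0\rangle$, where $\sigma^1_x$ flips $|0\rangle\leftrightarrow|1\rangle$ at $x$.) *)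

theory Defs
  imports "HOL-Analysis.Analysis"
begin

(* A basis vector of
   H_Lambda = (C^2)^{tensor Lambda} is labelled by the set S \<subseteq> Lambda of sites
   in state |1>.  Vectors of H_Lambda: functions  'p set \<Rightarrow> complex  (only values
   on Pow Lambda matter); operators on H_Lambda: matrices  'p set \<Rightarrow> 'p set \<Rightarrow> complex
   indexed by Pow Lambda. *)

type_synonym 'd site = "int ^ 'd"
type_synonym 'd vec = "'d site set \<Rightarrow> complex"
type_synonym 'd mat = "'d site set \<Rightarrow> 'd site set \<Rightarrow> complex"

definition unitv :: "'d::finite \<Rightarrow> 'd site" where
  "unitv j = (\<chi> i. if i = j then 1 else 0)"

definition nn_adj :: "'d::finite site \<Rightarrow> 'd site \<Rightarrow> bool" where
  "nn_adj x y \<longleftrightarrow> (\<exists>j. y = x + unitv j \<or> x = y + unitv j)"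

definition nn_connected :: "'d::finite site set \<Rightarrow> bool" where
  "nn_connected A \<longleftrightarrow>
     (\<forall>x\<in>A. \<forall>y\<in>A. (x, y) \<in> {(u, v). u \<in> A \<and> v \<in> A \<and> nn_adj u v}\<^sup>*)"

definition lam_pow :: "real ^ 'd \<Rightarrow> 'd::finite site \<Rightarrow> real" where
  "lam_pow lam x = (\<Prod>j\<in>UNIV. (lam $ j) powi (x $ j))"

definition Cw :: "real ^ 'd \<Rightarrow> 'd::finite site set \<Rightarrow> real" where
  "Cw lam A = (\<Sum>x\<in>A. lam_pow lam ((\<chi> i. 2 * x $ i)))"

definition mv :: "'d site set \<Rightarrow> 'd mat \<Rightarrow> 'd vec \<Rightarrow> 'd vec" where
  "mv L M v = (\<lambda>S. \<Sum>T\<in>Pow L. M S T * v T)"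

definition mmul :: "'d site set \<Rightarrow> 'd mat \<Rightarrow> 'd mat \<Rightarrow> 'd mat" where
  "mmul L A B = (\<lambda>S U. \<Sum>T\<in>Pow L. A S T * B T U)"

definition inner_H :: "'d site set \<Rightarrow> 'd vec \<Rightarrow> 'd vec \<Rightarrow> complex" where
  "inner_H L v w = (\<Sum>S\<in>Pow L. cnj (v S) * w S)"

definition vnorm :: "'d site set \<Rightarrow> 'd vec \<Rightarrow> real" where
  "vnorm L v = sqrt (\<Sum>S\<in>Pow L. (cmod (v S))\<^sup>2)"

definition opnorm :: "'d site set \<Rightarrow> 'd mat \<Rightarrow> real" where
  "opnorm L M = Sup {vnorm L (mv L M v) | v. vnorm L v \<le> 1}"

(* the two-site vector phi^(lam) on the pair (x,y): coefficient of the basis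
   state given by the set A \<subseteq> {x,y} of sites in state 1;
   phi = (|01> - lam |10>)/sqrt(1+lam^2), first factor at x *)
definition phi_coef :: "real \<Rightarrow> 'd site \<Rightarrow> 'd site \<Rightarrow> 'd site set \<Rightarrow> complex" where
  "phi_coef l x y A =
     (if A = {y} then complex_of_real (1 / sqrt (1 + l\<^sup>2))
      else if A = {x} then complex_of_real (- l / sqrt (1 + l\<^sup>2))
      else 0)"

(* h_{x,y} = |phi><phi| + |11><11| on the pair (x,y), tensored with the identity
   on the remaining sites *)
definition h_pair :: "real \<Rightarrow> 'd site \<Rightarrow> 'd site \<Rightarrow> 'd mat" where
  "h_pair l x y = (\<lambda>S T.
     if S - {x, y} = T - {x, y} then
       phi_coef l x y (S \<inter> {x, y}) * cnj (phi_coef l x y (T \<inter> {x, y}))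
       + (if S \<inter> {x, y} = {x, y} \<and> T \<inter> {x, y} = {x, y} then 1 else 0)
     else 0)"

definition Ham :: "real ^ 'd \<Rightarrow> 'd::finite site set \<Rightarrow> 'd mat" where
  "Ham lam L = (\<lambda>S T. \<Sum>j\<in>UNIV. \<Sum>x\<in>{x \<in> L. x + unitv j \<in> L}.
                    h_pair (lam $ j) x (x + unitv j) S T)"

definition kernel_H :: "'d site set \<Rightarrow> 'd mat \<Rightarrow> 'd vec set" where
  "kernel_H L M = {v. (\<forall>S. S \<notin> Pow L \<longrightarrow> v S = 0) \<and> (\<forall>S\<in>Pow L. mv L M v S = 0)}"

definition orth_proj :: "'d site set \<Rightarrow> 'd vec set \<Rightarrow> 'd mat" where
  "orth_proj L K = (THE P. (\<forall>S T. (S \<notin> Pow L \<or> T \<notin> Pow L) \<longrightarrow> P S T = 0) \<and>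
        (\<forall>v. (\<lambda>S. if S \<in> Pow L then mv L P v S else 0) \<in> K \<and>
             (\<forall>w\<in>K. inner_H L (\<lambda>S. v S - mv L P v S) w = 0)))"

definition Gproj :: "real ^ 'd \<Rightarrow> 'd::finite site set \<Rightarrow> 'd mat" where
  "Gproj lam L = orth_proj L (kernel_H L (Ham lam L))"

(* G^Lambda regarded as an operator on H_{L'} (L \<subseteq> L'), i.e. G^Lambda \<otimes> Id *)
definition Gext :: "real ^ 'd \<Rightarrow> 'd::finite site set \<Rightarrow> 'd site set \<Rightarrow> 'd mat" where
  "Gext lam L L' = (\<lambda>S T.
     if S \<subseteq> L' \<and> T \<subseteq> L' \<and> S - L = T - L then Gproj lam L (S \<inter> L) (T \<inter> L) else 0)"

end

theory Submission
  imports Defs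
begin

lemma unitv_nz: "unitv j \<noteq> (0::'d::finite site)"
proof
  assume "unitv j = (0::'d site)"
  then have "unitv j $ j = (0::'d site) $ j" by simp
  then show False by (simp add: unitv_def)
qed

lemma add_unitv_neq: "x \<noteq> x + unitv j"
  using unitv_nz[of j] by (metis add_cancel_right_right)

lemma lam_pow_pos: "\<forall>j. lam $ j > 0 \<Longrightarrow> lam_pow lam x > 0"
  unfolding lam_pow_def by (intro prod_pos) auto

lemma lam_pow_add_unit:
  assumes "\<forall>j. lam $ j > 0"
  shows "lam_pow lam (x + unitv j) = lam $ j * lam_pow lam x"
proof -
  have ne: "\<And>i. lam $ i \<noteq> 0" using assms by (metis less_irrefl)
  have "lam_pow lam (x + unitv j) = (\<Prod>i\<in>UNIV. lam $ i powi (x $ i + (if i = j then 1 else 0)))"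
    unfolding lam_pow_def unitv_def by simp
  also have "\<dots> = (\<Prod>i\<in>UNIV. (if i = j then lam $ i else 1) * lam $ i powi (x $ i))"
    by (intro prod.cong refl) (simp add: power_int_add ne)
  also have "\<dots> = lam $ j * lam_pow lam x"
    unfolding lam_pow_def prod.distrib by (simp add: prod.delta)
  finally show ?thesis .
qed

lemma lam_pow_double:
  assumes "\<forall>j. lam $ j > 0"
  shows "lam_pow lam (\<chi> i. 2 * x $ i) = (lam_pow lam x)\<^sup>2"
proof -
  have ne: "\<And>i. lam $ i \<noteq> 0" using assms by (metis less_irrefl)
  have "lam_pow lam (\<chi> i. 2 * x $ i) = (\<Prod>i\<in>UNIV. (lam $ i powi (x $ i))\<^sup>2)"
    unfolding lam_pow_def
  proof (intro prod.cong refl)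
    fix i
    have "(lam $ i powi (x $ i))\<^sup>2 = lam $ i powi (x $ i * int 2)"
      by (rule power_int_power')
    then show "lam $ i powi ((\<chi> i. 2 * x $ i) $ i) = (lam $ i powi (x $ i))\<^sup>2"
      by (simp add: mult.commute)
  qed
  then show ?thesis unfolding lam_pow_def by (simp add: prod_power_distrib)
qed

definition CC :: "real ^ 'd \<Rightarrow> 'd::finite site set \<Rightarrow> real" where
  "CC lam L = (\<Sum>x\<in>L. (lam_pow lam x)\<^sup>2)"

lemma Cw_CC: "\<forall>j. lam $ j > 0 \<Longrightarrow> Cw lam L = CC lam L"
  unfolding Cw_def CC_def by (simp add: lam_pow_double)

lemma CC_pos: assumes "\<forall>j. lam $ j > 0" "finite L" "L \<noteq> {}" shows "CC lam L > 0"
proof -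
  have "\<And>x. (lam_pow lam x)\<^sup>2 > 0" using lam_pow_pos[OF assms(1)] by (simp add: order_less_imp_not_eq2)
  then show ?thesis unfolding CC_def using assms by (intro sum_pos) auto
qed

lemma CC_nonneg: "CC lam L \<ge> 0"
  unfolding CC_def by (simp add: sum_nonneg)

lemma CC_union: "finite A \<Longrightarrow> finite B \<Longrightarrow> A \<inter> B = {} \<Longrightarrow> CC lam (A \<union> B) = CC lam A + CC lam B"
  unfolding CC_def by (simp add: sum.union_disjoint)

definition psi :: "real ^ 'd \<Rightarrow> 'd::finite site set \<Rightarrow> 'd site set \<Rightarrow> real" where
  "psi lam X S = (if card S = 1 \<and> S \<subseteq> X then lam_pow lam (the_elem S) else 0)"

lemma psi_single[simp]: "psi lam X {x} = (if x \<in> X then lam_pow lam x else 0)"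
  unfolding psi_def by simp

lemma psi_empty[simp]: "psi lam X {} = 0"
  unfolding psi_def by simp

lemma psi_nz: "psi lam X S \<noteq> 0 \<Longrightarrow> \<exists>x\<in>X. S = {x}"
  unfolding psi_def by (auto split: if_splits simp: card_1_singleton_iff)

lemma psi_card: "card S \<noteq> 1 \<Longrightarrow> psi lam X S = 0"
  unfolding psi_def by auto

lemma sum_Pow_split:
  assumes "finite A" "e \<subseteq> A"
  shows "(\<Sum>T\<in>Pow A. G T) = (\<Sum>U\<in>Pow (A - e). \<Sum>V\<in>Pow e. G (U \<union> V))"
proof -
  have fe: "finite e" using assms finite_subset by blast
  have inj: "inj_on (\<lambda>(U, V). U \<union> V) (Pow (A - e) \<times> Pow e)"
  proof (rule inj_onI, clarsimp)
    fix U V U' V'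
    assume "U \<subseteq> A - e" "V \<subseteq> e" "U' \<subseteq> A - e" "V' \<subseteq> e" "U \<union> V = U' \<union> V'"
    then have "U = (U \<union> V) - e" "U' = (U' \<union> V') - e" "V = (U \<union> V) \<inter> e" "V' = (U' \<union> V') \<inter> e"
      by auto
    then show "U = U' \<and> V = V'" using \<open>U \<union> V = U' \<union> V'\<close> by metis
  qed
  have img: "(\<lambda>(U, V). U \<union> V) ` (Pow (A - e) \<times> Pow e) = Pow A"
  proof
    show "(\<lambda>(U, V). U \<union> V) ` (Pow (A - e) \<times> Pow e) \<subseteq> Pow A" using assms by auto
    show "Pow A \<subseteq> (\<lambda>(U, V). U \<union> V) ` (Pow (A - e) \<times> Pow e)"
    proof
      fix T assume "T \<in> Pow A"
      then have "T = (\<lambda>(U, V). U \<union> V) (T - e, T \<inter> e)" "(T - e, T \<inter> e) \<in> Pow (A - e) \<times> Pow e"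
        by auto
      then show "T \<in> (\<lambda>(U, V). U \<union> V) ` (Pow (A - e) \<times> Pow e)" by blast
    qed
  qed
  have "(\<Sum>U\<in>Pow (A - e). \<Sum>V\<in>Pow e. G (U \<union> V)) = (\<Sum>(U,V)\<in>Pow (A - e) \<times> Pow e. G (U \<union> V))"
    by (rule sum.cartesian_product)
  also have "\<dots> = (\<Sum>T\<in>(\<lambda>(U, V). U \<union> V) ` (Pow (A - e) \<times> Pow e). G T)"
    by (subst sum.reindex[OF inj]) (simp add: case_prod_unfold)
  finally show ?thesis using img by simp
qed

lemma sum_psi:
  fixes H :: "'d::finite site set \<Rightarrow> 'a::{real_algebra_1,comm_monoid_add}"
  assumes "finite A" "X \<subseteq> A"
  shows "(\<Sum>S\<in>Pow A. of_real (psi lam X S) * H S) = (\<Sum>x\<in>X. of_real (lam_pow lam x) * H {x})"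
proof -
  have fX: "finite X" using assms finite_subset by blast
  have "(\<Sum>S\<in>Pow A. of_real (psi lam X S) * H S) = (\<Sum>S\<in>(\<lambda>x. {x}) ` X. of_real (psi lam X S) * H S)"
  proof (rule sum.mono_neutral_right)
    show "finite (Pow A)" using assms by simp
    show "(\<lambda>x. {x}) ` X \<subseteq> Pow A" using assms by auto
    show "\<forall>i\<in>Pow A - (\<lambda>x. {x}) ` X. of_real (psi lam X i) * H i = 0"
    proof
      fix S assume S: "S \<in> Pow A - (\<lambda>x. {x}) ` X"
      have "psi lam X S = 0"
      proof (rule ccontr)
        assume "psi lam X S \<noteq> 0"
        then obtain x where "x \<in> X" "S = {x}" using psi_nz by blast
        with S show False by blast
      qed
      then show "of_real (psi lam X S) * H S = 0" by simp
    qed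
  qed
  also have "\<dots> = (\<Sum>x\<in>X. of_real (lam_pow lam x) * H {x})"
    by (subst sum.reindex) (auto simp: inj_on_def)
  finally show ?thesis .
qed

lemma sum_fiber:
  assumes "finite A" "e \<subseteq> A" "S \<subseteq> A"
  shows "(\<Sum>T\<in>Pow A. if T - e = S - e then F T else 0) = (\<Sum>V\<in>Pow e. F ((S - e) \<union> V))"
proof -
  have "(\<Sum>T\<in>Pow A. if T - e = S - e then F T else 0)
      = (\<Sum>U\<in>Pow (A - e). \<Sum>V\<in>Pow e. if (U \<union> V) - e = S - e then F (U \<union> V) else 0)"
    by (rule sum_Pow_split[OF assms(1,2)])
  also have "\<dots> = (\<Sum>U\<in>Pow (A - e). if U = S - e then (\<Sum>V\<in>Pow e. F (U \<union> V)) else 0)"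
  proof (intro sum.cong refl)
    fix U assume U: "U \<in> Pow (A - e)"
    have "\<And>V. V \<in> Pow e \<Longrightarrow> (U \<union> V) - e = U" using U by auto
    then show "(\<Sum>V\<in>Pow e. if (U \<union> V) - e = S - e then F (U \<union> V) else 0)
             = (if U = S - e then (\<Sum>V\<in>Pow e. F (U \<union> V)) else 0)"
      by (auto intro: sum.neutral)
  qed
  also have "\<dots> = (\<Sum>V\<in>Pow e. F ((S - e) \<union> V))"
    using assms by (subst sum.delta) auto
  finally show ?thesis .
qed

lemma sum_Pow_small:
  assumes "finite L" "\<And>S. S \<subseteq> L \<Longrightarrow> card S \<ge> 2 \<Longrightarrow> F S = 0"
  shows "(\<Sum>S\<in>Pow L. F S) = F {} + (\<Sum>x\<in>L. F {x})"
proof -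
  have "(\<Sum>S\<in>Pow L. F S) = (\<Sum>S\<in>insert {} ((\<lambda>x. {x}) ` L). F S)"
  proof (rule sum.mono_neutral_right)
    show "finite (Pow L)" using assms by simp
    show "insert {} ((\<lambda>x. {x}) ` L) \<subseteq> Pow L" by auto
    show "\<forall>i\<in>Pow L - insert {} ((\<lambda>x. {x}) ` L). F i = 0"
    proof
      fix S assume S: "S \<in> Pow L - insert {} ((\<lambda>x. {x}) ` L)"
      then have "S \<noteq> {}" "\<And>x. S \<noteq> {x}" "finite S" using assms finite_subset by auto
      then have "card S \<ge> 2"
        by (metis One_nat_def card_1_singleton_iff card_0_eq less_2_cases not_le)
      then show "F S = 0" using S assms by auto
    qed
  qed
  also have "\<dots> = F {} + (\<Sum>x\<in>L. F {x})"
    using assms by (subst sum.insert) (auto simp: sum.reindex inj_on_def)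
  finally show ?thesis .
qed

lemma cnj_phi[simp]: "cnj (phi_coef l x y A) = phi_coef l x y A"
  unfolding phi_coef_def by simp

lemma Pow_pair: "Pow {x, y} = {{}, {x}, {y}, {x, y}}"
  by (auto simp: subset_insert_iff insert_Diff_if split: if_splits)

lemma sum_Pow_pair:
  assumes "x \<noteq> y"
  shows "(\<Sum>V\<in>Pow {x, y}. F V) = F {} + F {x} + F {y} + F {x, y}"
proof -
  have d: "{x} \<noteq> {y}" "{x} \<noteq> {x, y}" "{y} \<noteq> {x, y}" "{} \<noteq> {x}" "{} \<noteq> {y}" "{} \<noteq> {x,y}"
    using assms by (auto simp: insert_eq_iff)
  show ?thesis unfolding Pow_pair using d by (simp add: add.assoc)
qed

lemma phi_vals:
  assumes "x \<noteq> y"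
  shows "phi_coef l x y {} = 0" "phi_coef l x y {x, y} = 0"
    "phi_coef l x y {x} = complex_of_real (- l / sqrt (1 + l\<^sup>2))"
    "phi_coef l x y {y} = complex_of_real (1 / sqrt (1 + l\<^sup>2))"
  using assms unfolding phi_coef_def by (auto simp: insert_eq_iff)

lemma sum_phi:
  assumes "x \<noteq> y"
  shows "(\<Sum>V\<in>Pow {x, y}. phi_coef l x y V * F V)
       = complex_of_real (1 / sqrt (1 + l\<^sup>2)) * (F {y} - complex_of_real l * F {x})"
  using assms by (simp add: sum_Pow_pair phi_vals algebra_simps)

definition Phi :: "real \<Rightarrow> 'd site \<Rightarrow> 'd site \<Rightarrow> 'd vec \<Rightarrow> 'd site set \<Rightarrow> complex" where
  "Phi l x y v U = (\<Sum>V\<in>Pow {x, y}. phi_coef l x y V * v (U \<union> V))"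

lemma Phi_explicit:
  assumes "x \<noteq> y"
  shows "Phi l x y v U = complex_of_real (1 / sqrt (1 + l\<^sup>2)) * (v (insert y U) - complex_of_real l * v (insert x U))"
  unfolding Phi_def by (subst sum_phi[OF assms]) simp

lemma h_action:
  assumes "finite L" "x \<in> L" "y \<in> L" "x \<noteq> y" "S \<subseteq> L"
  shows "(\<Sum>T\<in>Pow L. h_pair l x y S T * v T)
       = phi_coef l x y (S \<inter> {x, y}) * Phi l x y v (S - {x, y}) + (if {x, y} \<subseteq> S then v S else 0)"
proof -
  let ?e = "{x, y}"
  have e: "?e \<subseteq> L" using assms by auto
  have "(\<Sum>T\<in>Pow L. h_pair l x y S T * v T)
      = (\<Sum>T\<in>Pow L. if T - ?e = S - ?e then
            (phi_coef l x y (S \<inter> ?e) * cnj (phi_coef l x y (T \<inter> ?e))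
             + (if S \<inter> ?e = ?e \<and> T \<inter> ?e = ?e then 1 else 0)) * v T else 0)"
    unfolding h_pair_def by (intro sum.cong refl) auto
  also have "\<dots> = (\<Sum>V\<in>Pow ?e. (phi_coef l x y (S \<inter> ?e) * cnj (phi_coef l x y (((S - ?e) \<union> V) \<inter> ?e))
             + (if S \<inter> ?e = ?e \<and> ((S - ?e) \<union> V) \<inter> ?e = ?e then 1 else 0)) * v ((S - ?e) \<union> V))"
    by (rule sum_fiber[OF assms(1) e assms(5)])
  also have "\<dots> = (\<Sum>V\<in>Pow ?e. phi_coef l x y (S \<inter> ?e) * (phi_coef l x y V * v ((S - ?e) \<union> V))
             + (if S \<inter> ?e = ?e \<and> V = ?e then v ((S - ?e) \<union> V) else 0))"
  proof (intro sum.cong refl)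
    fix V assume "V \<in> Pow ?e"
    then have "((S - ?e) \<union> V) \<inter> ?e = V" by auto
    then show "(phi_coef l x y (S \<inter> ?e) * cnj (phi_coef l x y (((S - ?e) \<union> V) \<inter> ?e))
             + (if S \<inter> ?e = ?e \<and> ((S - ?e) \<union> V) \<inter> ?e = ?e then 1 else 0)) * v ((S - ?e) \<union> V)
         = phi_coef l x y (S \<inter> ?e) * (phi_coef l x y V * v ((S - ?e) \<union> V))
             + (if S \<inter> ?e = ?e \<and> V = ?e then v ((S - ?e) \<union> V) else 0)"
      by (simp add: algebra_simps)
  qed
  also have "\<dots> = phi_coef l x y (S \<inter> ?e) * Phi l x y v (S - ?e)
      + (\<Sum>V\<in>Pow ?e. if S \<inter> ?e = ?e \<and> V = ?e then v ((S - ?e) \<union> V) else 0)"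
    unfolding Phi_def sum.distrib sum_distrib_left by simp
  also have "(\<Sum>V\<in>Pow ?e. if S \<inter> ?e = ?e \<and> V = ?e then v ((S - ?e) \<union> V) else 0)
      = (if ?e \<subseteq> S then v S else 0)"
  proof (cases "?e \<subseteq> S")
    case True
    then have "S \<inter> ?e = ?e" "(S - ?e) \<union> ?e = S" by auto
    then show ?thesis using True by (simp add: sum.delta)
  next
    case False
    then have "S \<inter> ?e \<noteq> ?e" by auto
    then show ?thesis using False by (simp; blast)
  qed
  finally show ?thesis .
qed

lemma cmod_sq_eq: "complex_of_real ((cmod z)\<^sup>2) = cnj z * z"
  by (subst complex_norm_square) (rule mult.commute)

lemma h_quad:
  assumes "finite L" "x \<in> L" "y \<in> L" "x \<noteq> y"
  shows "(\<Sum>S\<in>Pow L. cnj (v S) * (\<Sum>T\<in>Pow L. h_pair l x y S T * v T))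
       = complex_of_real (\<Sum>U\<in>Pow (L - {x, y}). (cmod (Phi l x y v U))\<^sup>2 + (cmod (v (U \<union> {x, y})))\<^sup>2)"
proof -
  let ?e = "{x, y}"
  have e: "?e \<subseteq> L" using assms by auto
  have "(\<Sum>S\<in>Pow L. cnj (v S) * (\<Sum>T\<in>Pow L. h_pair l x y S T * v T))
      = (\<Sum>S\<in>Pow L. cnj (v S) * (phi_coef l x y (S \<inter> ?e) * Phi l x y v (S - ?e) + (if ?e \<subseteq> S then v S else 0)))"
    using assms by (intro sum.cong refl) (simp add: h_action)
  also have "\<dots> = (\<Sum>U\<in>Pow (L - ?e). \<Sum>V\<in>Pow ?e. cnj (v (U \<union> V)) * (phi_coef l x y ((U \<union> V) \<inter> ?e)
        * Phi l x y v ((U \<union> V) - ?e) + (if ?e \<subseteq> U \<union> V then v (U \<union> V) else 0)))"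
    by (rule sum_Pow_split[OF assms(1) e])
  also have "\<dots> = (\<Sum>U\<in>Pow (L - ?e). Phi l x y v U * (\<Sum>V\<in>Pow ?e. phi_coef l x y V * cnj (v (U \<union> V)))
        + (\<Sum>V\<in>Pow ?e. if V = ?e then cnj (v (U \<union> V)) * v (U \<union> V) else 0))"
  proof (intro sum.cong refl)
    fix U assume U: "U \<in> Pow (L - ?e)"
    have "\<And>V. V \<in> Pow ?e \<Longrightarrow> (U \<union> V) \<inter> ?e = V \<and> (U \<union> V) - ?e = U \<and> (?e \<subseteq> U \<union> V \<longleftrightarrow> V = ?e)"
      using U by auto
    then show "(\<Sum>V\<in>Pow ?e. cnj (v (U \<union> V)) * (phi_coef l x y ((U \<union> V) \<inter> ?e)
        * Phi l x y v ((U \<union> V) - ?e) + (if ?e \<subseteq> U \<union> V then v (U \<union> V) else 0)))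
      = Phi l x y v U * (\<Sum>V\<in>Pow ?e. phi_coef l x y V * cnj (v (U \<union> V)))
        + (\<Sum>V\<in>Pow ?e. if V = ?e then cnj (v (U \<union> V)) * v (U \<union> V) else 0)"
      unfolding sum_distrib_left sum.distrib[symmetric]
      by (intro sum.cong refl) (simp add: algebra_simps)
  qed
  also have "\<dots> = (\<Sum>U\<in>Pow (L - ?e). complex_of_real ((cmod (Phi l x y v U))\<^sup>2 + (cmod (v (U \<union> ?e)))\<^sup>2))"
  proof (intro sum.cong refl)
    fix U
    have "(\<Sum>V\<in>Pow ?e. phi_coef l x y V * cnj (v (U \<union> V))) = cnj (Phi l x y v U)"
      unfolding Phi_def by simp
    moreover have "(\<Sum>V\<in>Pow ?e. if V = ?e then cnj (v (U \<union> V)) * v (U \<union> V) else 0)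
        = cnj (v (U \<union> ?e)) * v (U \<union> ?e)"
      by (simp add: sum.delta)
    ultimately show "Phi l x y v U * (\<Sum>V\<in>Pow ?e. phi_coef l x y V * cnj (v (U \<union> V)))
        + (\<Sum>V\<in>Pow ?e. if V = ?e then cnj (v (U \<union> V)) * v (U \<union> V) else 0)
        = complex_of_real ((cmod (Phi l x y v U))\<^sup>2 + (cmod (v (U \<union> ?e)))\<^sup>2)"
      by (simp only: of_real_add cmod_sq_eq mult.commute)
  qed
  also have "\<dots> = complex_of_real (\<Sum>U\<in>Pow (L - ?e). (cmod (Phi l x y v U))\<^sup>2 + (cmod (v (U \<union> ?e)))\<^sup>2)"
    by simp
  finally show ?thesis .
qed

definition bonds :: "'d::finite site set \<Rightarrow> 'd \<Rightarrow> 'd site set" where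
  "bonds L j = {x \<in> L. x + unitv j \<in> L}"

lemma Ham_action:
  "mv L (Ham lam L) v S = (\<Sum>j\<in>UNIV. \<Sum>x\<in>bonds L j. \<Sum>T\<in>Pow L. h_pair (lam $ j) x (x + unitv j) S T * v T)"
proof -
  have "mv L (Ham lam L) v S = (\<Sum>T\<in>Pow L. \<Sum>j\<in>UNIV. \<Sum>x\<in>bonds L j. h_pair (lam $ j) x (x + unitv j) S T * v T)"
    unfolding mv_def Ham_def bonds_def by (simp add: sum_distrib_right)
  also have "\<dots> = (\<Sum>j\<in>UNIV. \<Sum>T\<in>Pow L. \<Sum>x\<in>bonds L j. h_pair (lam $ j) x (x + unitv j) S T * v T)"
    by (rule sum.swap)
  also have "\<dots> = (\<Sum>j\<in>UNIV. \<Sum>x\<in>bonds L j. \<Sum>T\<in>Pow L. h_pair (lam $ j) x (x + unitv j) S T * v T)"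
    by (intro sum.cong refl sum.swap)
  finally show ?thesis .
qed

definition bondcond :: "real ^ 'd \<Rightarrow> 'd::finite site set \<Rightarrow> 'd vec \<Rightarrow> bool" where
  "bondcond lam L v \<longleftrightarrow> (\<forall>j x U. x \<in> L \<longrightarrow> x + unitv j \<in> L \<longrightarrow> U \<subseteq> L - {x, x + unitv j} \<longrightarrow>
      v (U \<union> {x, x + unitv j}) = 0 \<and> v (insert (x + unitv j) U) = complex_of_real (lam $ j) * v (insert x U))"

definition supp_in :: "'d site set \<Rightarrow> 'd vec \<Rightarrow> bool" where
  "supp_in L v \<longleftrightarrow> (\<forall>S. S \<notin> Pow L \<longrightarrow> v S = 0)"

lemma bondcond_imp_zero:
  assumes "finite L" "bondcond lam L v" "S \<in> Pow L"
  shows "mv L (Ham lam L) v S = 0"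
proof -
  have "\<And>j x. x \<in> bonds L j \<Longrightarrow> (\<Sum>T\<in>Pow L. h_pair (lam $ j) x (x + unitv j) S T * v T) = 0"
  proof -
    fix j x assume x: "x \<in> bonds L j"
    let ?y = "x + unitv j"
    have xy: "x \<in> L" "?y \<in> L" "x \<noteq> ?y" using x add_unitv_neq unfolding bonds_def by auto
    have U: "S - {x, ?y} \<subseteq> L - {x, ?y}" using assms(3) by auto
    have c: "v ((S - {x, ?y}) \<union> {x, ?y}) = 0 \<and>
        v (insert ?y (S - {x, ?y})) = complex_of_real (lam $ j) * v (insert x (S - {x, ?y}))"
      using assms(2) xy U unfolding bondcond_def by blast
    have "Phi (lam $ j) x ?y v (S - {x, ?y}) = 0"
      using c by (simp add: Phi_explicit[OF xy(3)])
    moreover have "{x, ?y} \<subseteq> S \<Longrightarrow> v S = 0"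
      using c by (metis Un_Diff_cancel2 sup.absorb1)
    ultimately show "(\<Sum>T\<in>Pow L. h_pair (lam $ j) x ?y S T * v T) = 0"
      using assms(1,3) xy by (simp add: h_action)
  qed
  then show ?thesis unfolding Ham_action by simp
qed

lemma zero_imp_bondcond:
  assumes "finite L" "\<forall>j. lam $ j > 0" "\<forall>S\<in>Pow L. mv L (Ham lam L) v S = 0"
  shows "bondcond lam L v"
proof -
  define Q where "Q j x = (\<Sum>U\<in>Pow (L - {x, x + unitv j}).
      (cmod (Phi (lam $ j) x (x + unitv j) v U))\<^sup>2 + (cmod (v (U \<union> {x, x + unitv j})))\<^sup>2)" for j x
  have Qnn: "\<And>j x. Q j x \<ge> 0" unfolding Q_def by (intro sum_nonneg) auto
  have "0 = (\<Sum>S\<in>Pow L. cnj (v S) * mv L (Ham lam L) v S)"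
    using assms(3) by simp
  also have "\<dots> = (\<Sum>S\<in>Pow L. \<Sum>j\<in>UNIV. \<Sum>x\<in>bonds L j. cnj (v S) * (\<Sum>T\<in>Pow L. h_pair (lam $ j) x (x + unitv j) S T * v T))"
    unfolding Ham_action by (simp add: sum_distrib_left)
  also have "\<dots> = (\<Sum>j\<in>UNIV. \<Sum>x\<in>bonds L j. \<Sum>S\<in>Pow L. cnj (v S) * (\<Sum>T\<in>Pow L. h_pair (lam $ j) x (x + unitv j) S T * v T))"
    by (subst sum.swap) (intro sum.cong refl sum.swap)
  also have "\<dots> = (\<Sum>j\<in>UNIV. \<Sum>x\<in>bonds L j. complex_of_real (Q j x))"
  proof (intro sum.cong refl)
    fix j x assume x: "x \<in> bonds L j"
    have xy: "x \<in> L" "x + unitv j \<in> L" "x \<noteq> x + unitv j" using x add_unitv_neq unfolding bonds_def by auto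
    show "(\<Sum>S\<in>Pow L. cnj (v S) * (\<Sum>T\<in>Pow L. h_pair (lam $ j) x (x + unitv j) S T * v T)) = complex_of_real (Q j x)"
      unfolding Q_def by (rule h_quad[OF assms(1) xy])
  qed
  also have "\<dots> = complex_of_real (\<Sum>j\<in>UNIV. \<Sum>x\<in>bonds L j. Q j x)" by simp
  finally have "0 = complex_of_real (\<Sum>j\<in>UNIV. \<Sum>x\<in>bonds L j. Q j x)" .
  then have "(\<Sum>j\<in>UNIV. \<Sum>x\<in>bonds L j. Q j x) = 0" by (metis of_real_eq_0_iff)
  moreover have fb: "\<And>j. finite (bonds L j)" using assms(1) unfolding bonds_def by simp
  moreover have "(\<Sum>j\<in>UNIV. \<Sum>x\<in>bonds L j. Q j x) = 0 \<longleftrightarrow> (\<forall>j\<in>UNIV. (\<Sum>x\<in>bonds L j. Q j x) = 0)"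
    by (rule sum_nonneg_eq_0_iff) (auto intro: sum_nonneg Qnn)
  ultimately have S0: "\<forall>j\<in>UNIV. (\<Sum>x\<in>bonds L j. Q j x) = 0"
    by simp
  have Q0: "\<And>j x. x \<in> bonds L j \<Longrightarrow> Q j x = 0"
  proof -
    fix j x assume xb: "x \<in> bonds L j"
    have s0: "(\<Sum>x\<in>bonds L j. Q j x) = 0" using S0 by blast
    have e: "(\<Sum>x\<in>bonds L j. Q j x) = 0 \<longleftrightarrow> (\<forall>x\<in>bonds L j. Q j x = 0)"
      by (rule sum_nonneg_eq_0_iff[OF fb]) (rule Qnn)
    show "Q j x = 0" using e s0 xb by simp
  qed
  show ?thesis unfolding bondcond_def
  proof (intro allI impI)
    fix j x U assume x: "x \<in> L" "x + unitv j \<in> L" and U: "U \<subseteq> L - {x, x + unitv j}"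
    let ?y = "x + unitv j"
    have xb: "x \<in> bonds L j" using x unfolding bonds_def by simp
    have fin: "finite (Pow (L - {x, ?y}))" using assms(1) by simp
    have "\<forall>U\<in>Pow (L - {x, ?y}). (cmod (Phi (lam $ j) x ?y v U))\<^sup>2 + (cmod (v (U \<union> {x, ?y})))\<^sup>2 = 0"
      using Q0[OF xb] unfolding Q_def by (subst (asm) sum_nonneg_eq_0_iff[OF fin]) auto
    then have "(cmod (Phi (lam $ j) x ?y v U))\<^sup>2 + (cmod (v (U \<union> {x, ?y})))\<^sup>2 = 0" using U by auto
    then have z: "Phi (lam $ j) x ?y v U = 0" "v (U \<union> {x, ?y}) = 0"
      by (simp_all add: add_nonneg_eq_0_iff)
    have "sqrt (1 + (lam $ j)\<^sup>2) > 0" by (simp add: add_pos_nonneg)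
    then have "complex_of_real (1 / sqrt (1 + (lam $ j)\<^sup>2)) \<noteq> 0" by simp
    then have "v (insert ?y U) - complex_of_real (lam $ j) * v (insert x U) = 0"
      using z(1) unfolding Phi_explicit[OF add_unitv_neq] by simp
    then show "v (U \<union> {x, ?y}) = 0 \<and> v (insert ?y U) = complex_of_real (lam $ j) * v (insert x U)"
      using z(2) by simp
  qed
qed

lemma kernel_iff_bond:
  assumes "finite L" "\<forall>j. lam $ j > 0"
  shows "v \<in> kernel_H L (Ham lam L) \<longleftrightarrow> supp_in L v \<and> bondcond lam L v"
proof
  assume "v \<in> kernel_H L (Ham lam L)"
  then have a: "supp_in L v" "\<forall>S\<in>Pow L. mv L (Ham lam L) v S = 0"
    unfolding kernel_H_def supp_in_def by auto
  then show "supp_in L v \<and> bondcond lam L v" using zero_imp_bondcond[OF assms a(2)] by simp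
next
  assume a: "supp_in L v \<and> bondcond lam L v"
  then have "\<forall>S\<in>Pow L. mv L (Ham lam L) v S = 0"
    using bondcond_imp_zero[OF assms(1)] by blast
  then show "v \<in> kernel_H L (Ham lam L)" using a unfolding kernel_H_def supp_in_def by auto
qed

definition formK :: "real ^ 'd \<Rightarrow> 'd::finite site set \<Rightarrow> 'd vec \<Rightarrow> bool" where
  "formK lam L v \<longleftrightarrow> supp_in L v \<and> (\<forall>S. S \<subseteq> L \<longrightarrow> 2 \<le> card S \<longrightarrow> v S = 0)
     \<and> (\<exists>c. \<forall>x\<in>L. v {x} = c * complex_of_real (lam_pow lam x))"

definition adjR :: "'d::finite site set \<Rightarrow> ('d site \<times> 'd site) set" where
  "adjR L = {(u, w). u \<in> L \<and> w \<in> L \<and> nn_adj u w}"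

lemma bond_adj:
  assumes bc: "bondcond lam L v" and lp: "\<forall>j. lam $ j > 0"
    and uw: "u \<in> L" "w \<in> L" "nn_adj u w" and U: "U \<subseteq> L - {u, w}"
  shows "u \<noteq> w \<and> v (insert u (insert w U)) = 0 \<and> (v (insert w U) = 0 \<longleftrightarrow> v (insert u U) = 0)"
proof -
  obtain j where j: "w = u + unitv j \<or> u = w + unitv j" using uw(3) unfolding nn_adj_def by blast
  have lne: "complex_of_real (lam $ j) \<noteq> 0" using lp by (metis less_irrefl of_real_eq_0_iff)
  show ?thesis
  proof (cases "w = u + unitv j")
    case True
    have "v (U \<union> {u, w}) = 0 \<and> v (insert w U) = complex_of_real (lam $ j) * v (insert u U)"
      using bc uw U True unfolding bondcond_def by blast
    then have h1: "v (insert u (insert w U)) = 0" and h2: "v (insert w U) = complex_of_real (lam $ j) * v (insert u U)"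
      by (auto simp: insert_commute)
    have "u \<noteq> w" using True add_unitv_neq by metis
    then show ?thesis using h1 h2 lne by simp
  next
    case False
    then have F: "u = w + unitv j" using j by blast
    have U': "U \<subseteq> L - {w, w + unitv j}" using U F by auto
    have w': "w + unitv j \<in> L" using uw F by simp
    have "v (U \<union> {w, w + unitv j}) = 0 \<and> v (insert (w + unitv j) U) = complex_of_real (lam $ j) * v (insert w U)"
      using bc uw(2) w' U' unfolding bondcond_def by blast
    then have "v (U \<union> {w, u}) = 0 \<and> v (insert u U) = complex_of_real (lam $ j) * v (insert w U)"
      using F by simp
    then have h1: "v (insert u (insert w U)) = 0" and h2: "v (insert u U) = complex_of_real (lam $ j) * v (insert w U)"
      by (auto simp: insert_commute)
    have "u \<noteq> w" using F add_unitv_neq by metis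
    then show ?thesis using h1 h2 lne by simp
  qed
qed

lemma multi_zero_path:
  assumes bc: "bondcond lam L v" and lp: "\<forall>j. lam $ j > 0"
    and p: "(x, z) \<in> (adjR L)\<^sup>*"
  shows "\<forall>S. S \<subseteq> L \<longrightarrow> x \<in> S \<longrightarrow> z \<in> S \<longrightarrow> x \<noteq> z \<longrightarrow> v S = 0"
  using p
proof (induction rule: converse_rtrancl_induct)
  case base
  then show ?case by blast
next
  case (step x x')
  have xx: "x \<in> L" "x' \<in> L" "nn_adj x x'" using step.hyps(1) unfolding adjR_def by auto
  show ?case
  proof (intro allI impI)
    fix S assume S: "S \<subseteq> L" "x \<in> S" "z \<in> S" "x \<noteq> z"
    show "v S = 0"
    proof (cases "x' = z")
      case True
      have "S - {x, x'} \<subseteq> L - {x, x'}" using S by auto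
      from bond_adj[OF bc lp xx this] have "v (insert x (insert x' (S - {x, x'}))) = 0" by blast
      moreover have "insert x (insert x' (S - {x, x'})) = S" using S True by auto
      ultimately show ?thesis by simp
    next
      case False
      show ?thesis
      proof (cases "x' \<in> S")
        case True
        then show ?thesis using step.IH S False by blast
      next
        case x'S: False
        let ?S' = "insert x' (S - {x})"
        have "?S' \<subseteq> L" "x' \<in> ?S'" "z \<in> ?S'" using S xx by auto
        then have "v ?S' = 0" using step.IH False by blast
        moreover have U: "S - {x} \<subseteq> L - {x, x'}" using S x'S by auto
        from bond_adj[OF bc lp xx U] have "v (insert x' (S - {x})) = 0 \<longleftrightarrow> v (insert x (S - {x})) = 0"
          by blast
        moreover have "insert x (S - {x}) = S" using S by auto
        ultimately show ?thesis by simp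
      qed
    qed
  qed
qed

lemma single_path:
  assumes bc: "bondcond lam L v" and lp: "\<forall>j. lam $ j > 0"
    and p: "(x0, z) \<in> (adjR L)\<^sup>*"
  shows "v {z} = v {x0} / complex_of_real (lam_pow lam x0) * complex_of_real (lam_pow lam z)"
  using p
proof (induction rule: rtrancl_induct)
  case base
  have "complex_of_real (lam_pow lam x0) \<noteq> 0"
    using lam_pow_pos[OF lp, of x0] by (metis less_irrefl of_real_eq_0_iff)
  then show ?case by simp
next
  case (step y z)
  let ?c = "v {x0} / complex_of_real (lam_pow lam x0)"
  have yz: "y \<in> L" "z \<in> L" "nn_adj y z" using step.hyps(2) unfolding adjR_def by auto
  obtain j where j: "z = y + unitv j \<or> y = z + unitv j" using yz(3) unfolding nn_adj_def by blast
  have lne: "complex_of_real (lam $ j) \<noteq> 0" using lp by (metis less_irrefl of_real_eq_0_iff)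
  show ?case
  proof (cases "z = y + unitv j")
    case True
    have "v (insert z {}) = complex_of_real (lam $ j) * v (insert y {})"
      using bc yz True unfolding bondcond_def by blast
    moreover have "lam_pow lam z = lam $ j * lam_pow lam y" using True lam_pow_add_unit[OF lp] by simp
    ultimately show ?thesis using step.IH by simp
  next
    case False
    then have F: "y = z + unitv j" using j by blast
    have "v (insert y {}) = complex_of_real (lam $ j) * v (insert z {})"
      using bc yz F unfolding bondcond_def by blast
    moreover have "lam_pow lam y = lam $ j * lam_pow lam z" using F lam_pow_add_unit[OF lp] by simp
    ultimately have "complex_of_real (lam $ j) * v {z} = complex_of_real (lam $ j) * (?c * complex_of_real (lam_pow lam z))"
      using step.IH by (simp add: algebra_simps)
    then show ?thesis using lne by (metis mult_left_cancel)
  qed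
qed

lemma bond_to_formK:
  assumes fin: "finite L" and lp: "\<forall>j. lam $ j > 0" and conn: "nn_connected L"
    and sp: "supp_in L v" and bc: "bondcond lam L v"
  shows "formK lam L v"
proof -
  have R: "\<And>x z. x \<in> L \<Longrightarrow> z \<in> L \<Longrightarrow> (x, z) \<in> (adjR L)\<^sup>*"
    using conn unfolding nn_connected_def adjR_def by blast
  have m: "\<forall>S. S \<subseteq> L \<longrightarrow> 2 \<le> card S \<longrightarrow> v S = 0"
  proof (intro allI impI)
    fix S assume S: "S \<subseteq> L" "2 \<le> card S"
    have "finite S" using S fin finite_subset by blast
    then have "\<not> (\<forall>a\<in>S. \<forall>b\<in>S. a = b)" using S(2) card_le_Suc0_iff_eq by fastforce
    then obtain x z where "x \<in> S" "z \<in> S" "x \<noteq> z" by blast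
    then show "v S = 0" using multi_zero_path[OF bc lp R] S by blast
  qed
  have s: "\<exists>c. \<forall>x\<in>L. v {x} = c * complex_of_real (lam_pow lam x)"
  proof (cases "L = {}")
    case True then show ?thesis by simp
  next
    case False
    then obtain x0 where x0: "x0 \<in> L" by blast
    show ?thesis using single_path[OF bc lp R[OF x0]] by blast
  qed
  show ?thesis unfolding formK_def using sp m s by blast
qed

lemma formK_to_bond:
  assumes fin: "finite L" and lp: "\<forall>j. lam $ j > 0" and fk: "formK lam L v"
  shows "bondcond lam L v"
  unfolding bondcond_def
proof (intro allI impI)
  fix j x U assume x: "x \<in> L" "x + unitv j \<in> L" and U: "U \<subseteq> L - {x, x + unitv j}"
  let ?y = "x + unitv j"
  have m: "\<And>S. S \<subseteq> L \<Longrightarrow> 2 \<le> card S \<Longrightarrow> v S = 0" using fk unfolding formK_def by blast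
  obtain c where c: "\<forall>x\<in>L. v {x} = c * complex_of_real (lam_pow lam x)" using fk unfolding formK_def by blast
  have fU: "finite U" using U fin finite_subset by blast
  have xy: "x \<noteq> ?y" by (rule add_unitv_neq)
  have "card (U \<union> {x, ?y}) \<ge> 2"
  proof -
    have "card {x, ?y} = 2" using xy by simp
    moreover have "card {x, ?y} \<le> card (U \<union> {x, ?y})" using fU by (intro card_mono) auto
    ultimately show ?thesis by simp
  qed
  moreover have "U \<union> {x, ?y} \<subseteq> L" using U x by auto
  ultimately have "v (U \<union> {x, ?y}) = 0" using m by blast
  moreover have "v (insert ?y U) = complex_of_real (lam $ j) * v (insert x U)"
  proof (cases "U = {}")
    case True
    have "lam_pow lam ?y = lam $ j * lam_pow lam x" by (rule lam_pow_add_unit[OF lp])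
    then show ?thesis using True c x by simp
  next
    case False
    have xU: "x \<notin> U" "?y \<notin> U" using U by auto
    have "card U \<ge> 1" using False fU by (simp add: Suc_leI card_gt_0_iff)
    then have "card (insert ?y U) \<ge> 2" "card (insert x U) \<ge> 2" using xU fU by auto
    moreover have "insert ?y U \<subseteq> L" "insert x U \<subseteq> L" using U x by auto
    ultimately have "v (insert ?y U) = 0" "v (insert x U) = 0" using m by blast+
    then show ?thesis by simp
  qed
  ultimately show "v (U \<union> {x, ?y}) = 0 \<and> v (insert ?y U) = complex_of_real (lam $ j) * v (insert x U)" by blast
qed

lemma kernel_formK:
  assumes "finite L" "\<forall>j. lam $ j > 0" "nn_connected L"
  shows "v \<in> kernel_H L (Ham lam L) \<longleftrightarrow> formK lam L v"
  using kernel_iff_bond[OF assms(1,2)] bond_to_formK[OF assms] formK_to_bond[OF assms(1,2)]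
  unfolding formK_def by blast

definition Pf :: "real ^ 'd \<Rightarrow> 'd::finite site set \<Rightarrow> 'd mat" where
  "Pf lam L S T = (if S \<subseteq> L \<and> T \<subseteq> L then complex_of_real ((if S = {} \<and> T = {} then 1 else 0)
      + psi lam L S * psi lam L T / CC lam L) else 0)"

definition sv :: "real ^ 'd \<Rightarrow> 'd::finite site set \<Rightarrow> 'd vec \<Rightarrow> complex" where
  "sv lam L v = (\<Sum>x\<in>L. complex_of_real (lam_pow lam x) * v {x})"

lemma sum_psi_Pow: "finite L \<Longrightarrow> (\<Sum>T\<in>Pow L. complex_of_real (psi lam L T) * v T) = sv lam L v"
  unfolding sv_def by (rule sum_psi) auto

lemma mv_Pf:
  assumes "finite L" "S \<subseteq> L"
  shows "mv L (Pf lam L) v S = (if S = {} then v {} else 0) + complex_of_real (psi lam L S / CC lam L) * sv lam L v"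
proof -
  have "mv L (Pf lam L) v S = (\<Sum>T\<in>Pow L. (if T = {} then (if S = {} then v T else 0) else 0)
        + complex_of_real (psi lam L S / CC lam L) * (complex_of_real (psi lam L T) * v T))"
    unfolding mv_def Pf_def using assms(2) by (intro sum.cong refl) (auto simp: algebra_simps)
  also have "\<dots> = (if S = {} then v {} else 0) + complex_of_real (psi lam L S / CC lam L) * sv lam L v"
  proof -
    have f: "finite (Pow L)" using assms(1) by simp
    have "(\<Sum>T\<in>Pow L. if T = {} then (if S = {} then v T else 0) else 0) = (if {} \<in> Pow L then (if S = {} then v {} else 0) else 0)"
      by (rule sum.delta[OF f])
    then show ?thesis
      unfolding sum.distrib sum_distrib_left[symmetric] sum_psi_Pow[OF assms(1)] by simp
  qed
  finally show ?thesis .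
qed

lemma inner_formK:
  assumes "finite L" "formK lam L w"
  shows "inner_H L f w = cnj (f {}) * w {} + (\<Sum>x\<in>L. cnj (f {x}) * w {x})"
  unfolding inner_H_def
proof (rule sum_Pow_small[OF assms(1)])
  fix S assume "S \<subseteq> L" "2 \<le> card S"
  then have "w S = 0" using assms(2) unfolding formK_def by blast
  then show "cnj (f S) * w S = 0" by simp
qed

lemma CC_eq_sum: "CC lam L = (\<Sum>x\<in>L. lam_pow lam x * lam_pow lam x)"
  unfolding CC_def by (simp add: power2_eq_square)

lemma Pf_prop:
  assumes fin: "finite L" and lp: "\<forall>j. lam $ j > 0"
  shows "(\<forall>S T. (S \<notin> Pow L \<or> T \<notin> Pow L) \<longrightarrow> Pf lam L S T = 0) \<and>
        (\<forall>v. formK lam L (\<lambda>S. if S \<in> Pow L then mv L (Pf lam L) v S else 0) \<and>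
             (\<forall>w. formK lam L w \<longrightarrow> inner_H L (\<lambda>S. v S - mv L (Pf lam L) v S) w = 0))"
proof (intro conjI allI impI)
  fix S T assume "S \<notin> Pow L \<or> T \<notin> Pow L"
  then show "Pf lam L S T = 0" unfolding Pf_def by auto
next
  fix v
  let ?u = "\<lambda>S. if S \<in> Pow L then mv L (Pf lam L) v S else 0"
  have sp: "supp_in L ?u" unfolding supp_in_def by auto
  have m: "\<forall>S. S \<subseteq> L \<longrightarrow> 2 \<le> card S \<longrightarrow> ?u S = 0"
  proof (intro allI impI)
    fix S assume S: "S \<subseteq> L" "2 \<le> card S"
    then have "S \<noteq> {}" "psi lam L S = 0" using psi_card[of S] by auto
    then show "?u S = 0" using S by (simp add: mv_Pf[OF fin S(1)])
  qed
  have s: "\<forall>x\<in>L. ?u {x} = sv lam L v / complex_of_real (CC lam L) * complex_of_real (lam_pow lam x)"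
    using fin by (simp add: mv_Pf)
  show "formK lam L ?u" unfolding formK_def using sp m s by blast
next
  fix v w assume w: "formK lam L w"
  obtain c where c: "\<forall>x\<in>L. w {x} = c * complex_of_real (lam_pow lam x)" using w unfolding formK_def by blast
  have "inner_H L (\<lambda>S. v S - mv L (Pf lam L) v S) w
      = (\<Sum>x\<in>L. cnj (v {x} - complex_of_real (lam_pow lam x / CC lam L) * sv lam L v) * (c * complex_of_real (lam_pow lam x)))"
    unfolding inner_formK[OF fin w] using fin c by (simp add: mv_Pf)
  also have "\<dots> = c * (cnj (sv lam L v) - cnj (sv lam L v) * complex_of_real ((\<Sum>x\<in>L. lam_pow lam x * lam_pow lam x) / CC lam L))"
    unfolding sv_def by (simp add: algebra_simps sum_distrib_left sum_distrib_right sum_subtractf sum_divide_distrib)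
  also have "\<dots> = 0"
  proof (cases "L = {}")
    case True then show ?thesis by (simp add: sv_def)
  next
    case False
    then have "CC lam L > 0" using CC_pos[OF lp fin] by simp
    then show ?thesis unfolding CC_eq_sum[symmetric] by simp
  qed
  finally show "inner_H L (\<lambda>S. v S - mv L (Pf lam L) v S) w = 0" .
qed


lemma Pf_unique:
  assumes fin: "finite L" and lp: "\<forall>j. lam $ j > 0"
    and H0: "\<forall>S T. (S \<notin> Pow L \<or> T \<notin> Pow L) \<longrightarrow> P S T = 0"
    and H1: "\<forall>v. formK lam L (\<lambda>S. if S \<in> Pow L then mv L P v S else 0) \<and>
             (\<forall>w. formK lam L w \<longrightarrow> inner_H L (\<lambda>S. v S - mv L P v S) w = 0)"
  shows "P = Pf lam L"
proof (intro ext)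
  fix S T
  show "P S T = Pf lam L S T"
  proof (cases "S \<in> Pow L \<and> T \<in> Pow L")
    case False
    then show ?thesis using H0 Pf_prop[OF fin lp] by metis
  next
    case True
    then have SL: "S \<subseteq> L" and TL: "T \<subseteq> L" by auto
    define \<delta> where "\<delta> = (\<lambda>U. if U = T then (1::complex) else 0)"
    have fP: "finite (Pow L)" using fin by simp
    have mvd: "\<And>S'. mv L P \<delta> S' = P S' T"
    proof -
      fix S'
      have "mv L P \<delta> S' = (\<Sum>U\<in>Pow L. if U = T then P S' U else 0)"
        unfolding mv_def \<delta>_def by (intro sum.cong refl) auto
      also have "\<dots> = P S' T" using sum.delta[OF fP, of T "P S'"] TL by simp
      finally show "mv L P \<delta> S' = P S' T" .
    qed
    let ?u = "\<lambda>S. if S \<in> Pow L then mv L P \<delta> S else 0"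
    have fK: "formK lam L ?u" and orth: "\<And>w. formK lam L w \<Longrightarrow> inner_H L (\<lambda>S. \<delta> S - mv L P \<delta> S) w = 0"
      using H1 by blast+
    obtain c where c: "\<forall>x\<in>L. ?u {x} = c * complex_of_real (lam_pow lam x)" using fK unfolding formK_def by blast
    have Px: "\<And>x. x \<in> L \<Longrightarrow> P {x} T = c * complex_of_real (lam_pow lam x)" using c mvd by simp
    have Pm: "\<And>S. S \<subseteq> L \<Longrightarrow> 2 \<le> card S \<Longrightarrow> P S T = 0"
    proof -
      fix S assume "S \<subseteq> L" "2 \<le> card S"
      then have "?u S = 0" using fK unfolding formK_def by blast
      then show "P S T = 0" using \<open>S \<subseteq> L\<close> mvd by simp
    qed
    define w0 where "w0 = (\<lambda>U::'a site set. if U = {} then (1::complex) else 0)"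
    have w0K: "formK lam L w0" unfolding formK_def supp_in_def w0_def
      by (auto intro: exI[of _ 0])
    have "inner_H L (\<lambda>S. \<delta> S - mv L P \<delta> S) w0 = cnj (\<delta> {} - P {} T)"
      unfolding inner_formK[OF fin w0K] mvd by (simp add: w0_def)
    then have P0: "P {} T = \<delta> {}" using orth[OF w0K] by simp
    define wp where "wp = (\<lambda>U. complex_of_real (psi lam L U))"
    have wpK: "formK lam L wp" unfolding formK_def supp_in_def wp_def
    proof (intro conjI allI impI)
      fix S :: "'a site set" assume "S \<notin> Pow L" then show "complex_of_real (psi lam L S) = 0"
        unfolding psi_def by auto
    next
      fix S :: "'a site set" assume "S \<subseteq> L" "2 \<le> card S" then show "complex_of_real (psi lam L S) = 0"
        using psi_card[of S] by simp
    next
      show "\<exists>c. \<forall>x\<in>L. complex_of_real (psi lam L {x}) = c * complex_of_real (lam_pow lam x)"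
        by (rule exI[of _ 1]) simp
    qed
    have dsum: "(\<Sum>x\<in>L. complex_of_real (lam_pow lam x) * \<delta> {x}) = complex_of_real (psi lam L T)"
    proof -
      have "(\<Sum>x\<in>L. complex_of_real (lam_pow lam x) * \<delta> {x}) = (\<Sum>U\<in>Pow L. complex_of_real (psi lam L U) * \<delta> U)"
        by (rule sum_psi[symmetric]) (use fin in auto)
      also have "\<dots> = (\<Sum>U\<in>Pow L. if U = T then complex_of_real (psi lam L U) else 0)"
        unfolding \<delta>_def by (intro sum.cong refl) auto
      also have "\<dots> = complex_of_real (psi lam L T)" using sum.delta[OF fP, of T] TL by simp
      finally show ?thesis .
    qed
    have "0 = inner_H L (\<lambda>S. \<delta> S - mv L P \<delta> S) wp" using orth[OF wpK] by simp
    also have "\<dots> = (\<Sum>x\<in>L. cnj (\<delta> {x} - c * complex_of_real (lam_pow lam x)) * complex_of_real (lam_pow lam x))"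
      unfolding inner_formK[OF fin wpK] mvd using Px by (simp add: wp_def)
    also have "\<dots> = (\<Sum>x\<in>L. complex_of_real (lam_pow lam x) * \<delta> {x}) - cnj c * complex_of_real (\<Sum>x\<in>L. lam_pow lam x * lam_pow lam x)"
    proof -
      have "\<And>U. cnj (\<delta> U) = \<delta> U" by (simp add: \<delta>_def)
      then show ?thesis by (simp add: algebra_simps sum_subtractf sum_distrib_left)
    qed
    also have "\<dots> = complex_of_real (psi lam L T) - cnj c * complex_of_real (CC lam L)"
      unfolding dsum CC_eq_sum ..
    finally have cC: "cnj c * complex_of_real (CC lam L) = complex_of_real (psi lam L T)" by simp
    have fS: "finite S" using SL fin finite_subset by blast
    have "card S = 0 \<or> card S = 1 \<or> 2 \<le> card S" by linarith
    then have "S = {} \<or> (\<exists>x. S = {x}) \<or> 2 \<le> card S"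
      using fS by (auto simp: card_1_singleton_iff)
    then consider "S = {}" | x where "S = {x}" | "2 \<le> card S" by blast
    then show ?thesis
    proof cases
      case 1 then show ?thesis using P0 SL TL unfolding Pf_def \<delta>_def by auto
    next
      case (2 x)
      then have x: "x \<in> L" using SL by simp
      then have "CC lam L > 0" using CC_pos[OF lp fin] by auto
      then have "cnj c = complex_of_real (psi lam L T / CC lam L)" using cC
        by (simp add: field_simps)
      then have "c = complex_of_real (psi lam L T / CC lam L)"
        by (metis complex_cnj_cnj complex_cnj_complex_of_real)
      then show ?thesis using Px[OF x] 2 x TL unfolding Pf_def by (simp add: mult.commute)
    next
      case 3
      then have "S \<noteq> {}" "psi lam L S = 0" using psi_card[of S] by auto
      then show ?thesis using Pm[OF SL 3] SL TL unfolding Pf_def by simp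
    qed
  qed
qed

lemma Gproj_eq:
  assumes fin: "finite L" and lp: "\<forall>j. lam $ j > 0" and conn: "nn_connected L"
  shows "Gproj lam L = Pf lam L"
proof -
  have K: "kernel_H L (Ham lam L) = {w. formK lam L w}" using kernel_formK[OF assms] by blast
  show ?thesis unfolding Gproj_def orth_proj_def K
  proof (rule the_equality)
    show "(\<forall>S T. (S \<notin> Pow L \<or> T \<notin> Pow L) \<longrightarrow> Pf lam L S T = 0) \<and>
        (\<forall>v. (\<lambda>S. if S \<in> Pow L then mv L (Pf lam L) v S else 0) \<in> {w. formK lam L w} \<and>
             (\<forall>w\<in>{w. formK lam L w}. inner_H L (\<lambda>S. v S - mv L (Pf lam L) v S) w = 0))"
      unfolding mem_Collect_eq Ball_def by (rule Pf_prop[OF fin lp])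
  next
    fix P assume A: "(\<forall>S T. (S \<notin> Pow L \<or> T \<notin> Pow L) \<longrightarrow> P S T = 0) \<and>
        (\<forall>v. (\<lambda>S. if S \<in> Pow L then mv L P v S else 0) \<in> {w. formK lam L w} \<and>
             (\<forall>w\<in>{w. formK lam L w}. inner_H L (\<lambda>S. v S - mv L P v S) w = 0))"
    show "P = Pf lam L"
    proof (rule Pf_unique[OF fin lp])
      show "\<forall>S T. (S \<notin> Pow L \<or> T \<notin> Pow L) \<longrightarrow> P S T = 0" using A by blast
      show "\<forall>v. formK lam L (\<lambda>S. if S \<in> Pow L then mv L P v S else 0) \<and>
             (\<forall>w. formK lam L w \<longrightarrow> inner_H L (\<lambda>S. v S - mv L P v S) w = 0)"
      proof (intro allI conjI impI)
        fix v
        have Av: "(\<lambda>S. if S \<in> Pow L then mv L P v S else 0) \<in> {w. formK lam L w} \<and>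
             (\<forall>w\<in>{w. formK lam L w}. inner_H L (\<lambda>S. v S - mv L P v S) w = 0)"
          using conjunct2[OF A] by (rule spec)
        then show "formK lam L (\<lambda>S. if S \<in> Pow L then mv L P v S else 0)" by simp
        fix w assume "formK lam L w"
        then show "inner_H L (\<lambda>S. v S - mv L P v S) w = 0" using Av by simp
      qed
    qed
  qed
qed

definition opG :: "real ^ 'd \<Rightarrow> 'd::finite site set \<Rightarrow> 'd vec \<Rightarrow> 'd site set \<Rightarrow> complex" where
  "opG lam L v S = (if S \<inter> L = {} then v S else 0) + complex_of_real (psi lam L (S \<inter> L) / CC lam L)
     * (\<Sum>x\<in>L. complex_of_real (lam_pow lam x) * v (insert x (S - L)))"

lemma mv_Gext:
  assumes fin: "finite A" and LA: "L \<subseteq> A" and lp: "\<forall>j. lam $ j > 0" and conn: "nn_connected L"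
    and SA: "S \<subseteq> A"
  shows "mv A (Gext lam L A) v S = opG lam L v S"
proof -
  have finL: "finite L" using fin LA finite_subset by blast
  have "mv A (Gext lam L A) v S = (\<Sum>T\<in>Pow A. if T - L = S - L then Pf lam L (S \<inter> L) (T \<inter> L) * v T else 0)"
    unfolding mv_def Gext_def Gproj_eq[OF finL lp conn] using SA by (intro sum.cong refl) auto
  also have "\<dots> = (\<Sum>V\<in>Pow L. Pf lam L (S \<inter> L) (((S - L) \<union> V) \<inter> L) * v ((S - L) \<union> V))"
    by (rule sum_fiber[OF fin LA SA])
  also have "\<dots> = (\<Sum>V\<in>Pow L. Pf lam L (S \<inter> L) V * (\<lambda>V. v ((S - L) \<union> V)) V)"
  proof (intro sum.cong refl)
    fix V assume "V \<in> Pow L"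
    then have "((S - L) \<union> V) \<inter> L = V" by auto
    then show "Pf lam L (S \<inter> L) (((S - L) \<union> V) \<inter> L) * v ((S - L) \<union> V) = Pf lam L (S \<inter> L) V * (\<lambda>V. v ((S - L) \<union> V)) V"
      by simp
  qed
  also have "\<dots> = mv L (Pf lam L) (\<lambda>V. v ((S - L) \<union> V)) (S \<inter> L)"
    unfolding mv_def ..
  also have "\<dots> = (if S \<inter> L = {} then v ((S - L) \<union> {}) else 0)
      + complex_of_real (psi lam L (S \<inter> L) / CC lam L) * sv lam L (\<lambda>V. v ((S - L) \<union> V))"
    by (rule mv_Pf[OF finL]) auto
  also have "\<dots> = opG lam L v S"
  proof -
    have e1: "(if S \<inter> L = {} then v ((S - L) \<union> {}) else 0) = (if S \<inter> L = {} then v S else 0)"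
    proof (cases "S \<inter> L = {}")
      case True then have "S - L = S" by auto
      then show ?thesis using True by simp
    qed simp
    have e2: "sv lam L (\<lambda>V. v ((S - L) \<union> V)) = (\<Sum>x\<in>L. complex_of_real (lam_pow lam x) * v (insert x (S - L)))"
      unfolding sv_def by (rule sum.cong[OF refl]) (metis Un_insert_right sup_bot.right_neutral)
    show ?thesis unfolding opG_def e1 e2 ..
  qed
  finally show ?thesis .
qed

lemma mv_mmul: "finite A \<Longrightarrow> mv A (mmul A X Y) v S = mv A X (mv A Y v) S"
proof -
  have "mv A (mmul A X Y) v S = (\<Sum>T\<in>Pow A. \<Sum>U\<in>Pow A. X S U * (Y U T * v T))"
    unfolding mv_def mmul_def sum_distrib_right by (simp add: mult.assoc)
  also have "\<dots> = (\<Sum>U\<in>Pow A. \<Sum>T\<in>Pow A. X S U * (Y U T * v T))" by (rule sum.swap)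
  also have "\<dots> = mv A X (mv A Y v) S"
    unfolding mv_def sum_distrib_left ..
  finally show ?thesis .
qed

lemma opG_cong:
  assumes "\<And>T. T \<subseteq> A \<Longrightarrow> u T = u' T" "S \<subseteq> A" "L \<subseteq> A"
  shows "opG lam L u S = opG lam L u' S"
proof -
  have "\<And>x. x \<in> L \<Longrightarrow> insert x (S - L) \<subseteq> A" using assms by auto
  then show ?thesis unfolding opG_def using assms by (simp cong: sum.cong)
qed

lemma opG_empty: "S \<inter> L = {} \<Longrightarrow> opG lam L v S = v S"
  unfolding opG_def by simp

lemma opG_card2:
  assumes "finite S" "2 \<le> card (S \<inter> L)"
  shows "opG lam L v S = 0"
proof -
  have "S \<inter> L \<noteq> {}" using assms by auto
  moreover have "card (S \<inter> L) \<noteq> 1" using assms by simp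
  then have "psi lam L (S \<inter> L) = 0" by (rule psi_card)
  ultimately show ?thesis unfolding opG_def by simp
qed

lemma opG_single:
  assumes "S \<inter> L = {x}"
  shows "opG lam L v S = complex_of_real (lam_pow lam x / CC lam L)
     * (\<Sum>y\<in>L. complex_of_real (lam_pow lam y) * v (insert y (S - L)))"
proof -
  have "x \<in> L" using assms by auto
  then show ?thesis unfolding opG_def using assms by simp
qed

locale Mset =
  fixes lam :: "real ^ 'd::finite" and A B a :: "'d site set"
  assumes lp: "\<forall>j. lam $ j > 0" and finA: "finite A" and aB: "a \<subseteq> B" and BA: "B \<subseteq> A"
    and Bne: "B \<noteq> {}" and BneA: "B \<noteq> A"
begin

abbreviation "D \<equiv> A - a"
abbreviation "R \<equiv> A - B"

lemma finB: "finite B" using finA BA finite_subset by blast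
lemma fina: "finite a" using finB aB finite_subset by blast
lemma finD: "finite D" using finA by simp
lemma finR: "finite R" using finA by simp
lemma Rne: "R \<noteq> {}" using BA BneA by blast
lemma RD: "R \<subseteq> D" using aB by blast

lemma CB_pos: "CC lam B > 0" using CC_pos[OF lp finB Bne] .
lemma CA_pos: "CC lam A > 0" using CC_pos[OF lp finA] Bne BA by blast
lemma CR_pos: "CC lam R > 0" using CC_pos[OF lp finR Rne] .
lemma CD_pos: "CC lam D > 0" using CC_pos[OF lp finD] Rne RD by blast

lemma CA_split: "CC lam A = CC lam B + CC lam R"
proof -
  have "A = B \<union> R" using BA by blast
  then show ?thesis using CC_union[OF finB finR, of lam] by auto
qed
lemma CB_split: "CC lam B = CC lam a + CC lam (D \<inter> B)"
proof -
  have "B = a \<union> (D \<inter> B)" using aB BA by blast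
  moreover have "finite (D \<inter> B)" using finB by simp
  ultimately show ?thesis using CC_union[OF fina, of "D \<inter> B" lam] by auto
qed
lemma CD_split: "CC lam D = CC lam (D \<inter> B) + CC lam R"
proof -
  have "D = (D \<inter> B) \<union> R" using aB BA by blast
  moreover have "finite (D \<inter> B)" using finB by simp
  ultimately show ?thesis using CC_union[OF _ finR, of "D \<inter> B" lam] by auto
qed
lemma CA_split2: "CC lam A = CC lam a + CC lam D"
proof -
  have "A = a \<union> D" using aB BA by blast
  then show ?thesis using CC_union[OF fina finD, of lam] by auto
qed

definition w :: "'d vec \<Rightarrow> 'd vec" where
  "w v T = opG lam B v T - opG lam A v T"

definition alpha :: "'d vec \<Rightarrow> complex" where
  "alpha v = sv lam B v / complex_of_real (CC lam B) - sv lam A v / complex_of_real (CC lam A)"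

lemma W0: "w v {} = 0"
  unfolding w_def by (simp add: opG_empty)

lemma W1:
  assumes "T \<subseteq> A" "2 \<le> card (T \<inter> B)"
  shows "w v T = 0"
proof -
  have fT: "finite T" using assms finA finite_subset by blast
  have "card (T \<inter> B) \<le> card (T \<inter> A)" using fT by (intro card_mono) (use BA in auto)
  then have "2 \<le> card (T \<inter> A)" using assms by simp
  then show ?thesis unfolding w_def using opG_card2[OF fT] assms by simp
qed

lemma W2:
  assumes "y \<in> B"
  shows "w v {y} = complex_of_real (lam_pow lam y) * alpha v"
proof -
  have yA: "y \<in> A" using assms BA by auto
  have "opG lam B v {y} = complex_of_real (lam_pow lam y / CC lam B) * sv lam B v"
    using opG_single[of "{y}" B y] assms unfolding sv_def by simp
  moreover have "opG lam A v {y} = complex_of_real (lam_pow lam y / CC lam A) * sv lam A v"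
    using opG_single[of "{y}" A y] yA unfolding sv_def by simp
  ultimately show ?thesis unfolding w_def alpha_def by (simp add: field_simps)
qed

lemma W3:
  assumes "y \<in> R"
  shows "w v {y} = v {y} - complex_of_real (lam_pow lam y / CC lam A) * sv lam A v"
proof -
  have "opG lam B v {y} = v {y}" using assms by (intro opG_empty) auto
  moreover have "opG lam A v {y} = complex_of_real (lam_pow lam y / CC lam A) * sv lam A v"
    using opG_single[of "{y}" A y] assms unfolding sv_def by simp
  ultimately show ?thesis unfolding w_def by simp
qed

lemma W4:
  assumes "y \<in> R" "z \<in> B"
  shows "w v {y, z} = complex_of_real (lam_pow lam z / CC lam B) * (\<Sum>u\<in>B. complex_of_real (lam_pow lam u) * v (insert u {y}))"
proof -
  have "{y, z} \<inter> B = {z}" "{y, z} - B = {y}" using assms by auto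
  then have "opG lam B v {y, z} = complex_of_real (lam_pow lam z / CC lam B) * (\<Sum>u\<in>B. complex_of_real (lam_pow lam u) * v (insert u {y}))"
    using opG_single[of "{y, z}" B z] by simp
  moreover have "opG lam A v {y, z} = 0"
  proof (rule opG_card2)
    have "{y, z} \<inter> A = {y, z}" "y \<noteq> z" using assms BA by auto
    then show "2 \<le> card ({y, z} \<inter> A)" by simp
  qed simp
  ultimately show ?thesis unfolding w_def by simp
qed

end

context Mset begin

definition hh :: "'d site set \<Rightarrow> real" where
  "hh S = psi lam a S - psi lam D S * CC lam a / CC lam D"

definition kk :: "'d site set \<Rightarrow> real" where
  "kk S = psi lam a (S \<inter> a) * psi lam D (S \<inter> D)"

definition beta :: "'d vec \<Rightarrow> complex" where
  "beta v = (\<Sum>y\<in>R. \<Sum>u\<in>B. complex_of_real (lam_pow lam y * lam_pow lam u) * v (insert u {y}))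
            / complex_of_real (CC lam D * CC lam B)"

lemma main_formula:
  assumes SA: "S \<subseteq> A"
  shows "opG lam D (w v) S = alpha v * complex_of_real (hh S) + beta v * complex_of_real (kk S)"
proof -
  have fS: "finite S" using SA finA finite_subset by blast
  let ?X = "S \<inter> D" and ?U = "S \<inter> a"
  have SUX: "S = ?U \<union> ?X" "?U \<inter> ?X = {}" "S - D = ?U" using SA by auto
  have fX: "finite ?X" "finite ?U" using fS by auto
  have cardS: "card S = card ?U + card ?X" using SUX fX by (metis card_Un_disjoint)
  have "card ?X = 0 \<or> card ?X = 1 \<or> 2 \<le> card ?X" by linarith
  then have "?X = {} \<or> (\<exists>x. ?X = {x}) \<or> 2 \<le> card ?X" using fX by (auto simp: card_1_singleton_iff)
  then consider "?X = {}" | x where "?X = {x}" | "2 \<le> card ?X" by blast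
  then show ?thesis
  proof cases
    case 1
    then have SU: "S = ?U" "S \<subseteq> a" using SUX by auto
    have lhs: "opG lam D (w v) S = w v S" using 1 by (simp add: opG_empty)
    have kk0: "kk S = 0" unfolding kk_def using 1 by simp
    have "card S = 0 \<or> card S = 1 \<or> 2 \<le> card S" by linarith
    then have "S = {} \<or> (\<exists>z. S = {z}) \<or> 2 \<le> card S" using fS by (auto simp: card_1_singleton_iff)
    then consider "S = {}" | z where "S = {z}" | "2 \<le> card S" by blast
    then show ?thesis
    proof cases
      case 1 then show ?thesis using lhs kk0 W0 unfolding hh_def by simp
    next
      case (2 z)
      then have z: "z \<in> a" "z \<in> B" "z \<notin> D" using SU aB by auto
      then have "hh S = lam_pow lam z" unfolding hh_def using 2 by simp
      then show ?thesis using lhs kk0 W2[OF z(2)] 2 by simp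
    next
      case 3
      have "S \<inter> B = S" using SU aB by auto
      then have "w v S = 0" using W1[OF SA] 3 by simp
      moreover have c1: "card S \<noteq> 1" using 3 by simp
      then have "psi lam a S = 0" "psi lam D S = 0" using psi_card[OF c1] by blast+
      ultimately show ?thesis using lhs kk0 unfolding hh_def by simp
    qed
  next
    case (2 x)
    note Xx = this
    then have x: "x \<in> D" "x \<in> A" "x \<notin> a" by auto
    have lhs: "opG lam D (w v) S = complex_of_real (lam_pow lam x / CC lam D)
        * (\<Sum>y\<in>D. complex_of_real (lam_pow lam y) * w v (insert y ?U))"
      using opG_single[OF Xx] SUX by simp
    have "card ?U = 0 \<or> card ?U = 1 \<or> 2 \<le> card ?U" by linarith
    then have "?U = {} \<or> (\<exists>z. ?U = {z}) \<or> 2 \<le> card ?U" using fX by (auto simp: card_1_singleton_iff)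
    then consider "?U = {}" | z where "?U = {z}" | "2 \<le> card ?U" by blast
    then show ?thesis
    proof cases
      case 1
      then have Sx: "S = {x}" using SUX Xx by auto
      have kk0: "kk S = 0" unfolding kk_def using 1 by simp
      have hhS: "hh S = - lam_pow lam x * CC lam a / CC lam D" unfolding hh_def using Sx x by simp
      let ?sR = "\<Sum>y\<in>R. complex_of_real (lam_pow lam y) * v {y}"
      have sA: "sv lam A v = sv lam B v + ?sR"
      proof -
        have "A = B \<union> R" using BA by blast
        then show ?thesis unfolding sv_def using sum.union_disjoint[OF finB finR] by auto
      qed
      have fDB: "finite (D \<inter> B)" using finB by simp
      have "(\<Sum>y\<in>D. complex_of_real (lam_pow lam y) * w v {y})
          = (\<Sum>y\<in>D \<inter> B. complex_of_real (lam_pow lam y) * w v {y}) + (\<Sum>y\<in>R. complex_of_real (lam_pow lam y) * w v {y})"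
      proof -
        have e: "D = (D \<inter> B) \<union> R" using aB BA by blast
        have d: "(D \<inter> B) \<inter> R = {}" by blast
        show ?thesis by (subst e) (rule sum.union_disjoint[OF fDB finR d])
      qed
      also have "\<dots> = (\<Sum>y\<in>D \<inter> B. complex_of_real (lam_pow lam y * lam_pow lam y) * alpha v)
          + (\<Sum>y\<in>R. complex_of_real (lam_pow lam y) * v {y} - complex_of_real (lam_pow lam y * lam_pow lam y / CC lam A) * sv lam A v)"
      proof (intro arg_cong2[where f="(+)"] sum.cong refl)
        fix y assume "y \<in> D \<inter> B"
        then have y: "y \<in> B" by simp
        show "complex_of_real (lam_pow lam y) * w v {y} = complex_of_real (lam_pow lam y * lam_pow lam y) * alpha v"
          by (simp only: W2[OF y] of_real_mult mult.assoc)
      next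
        fix y assume y: "y \<in> R"
        have "complex_of_real (lam_pow lam y) * w v {y}
            = complex_of_real (lam_pow lam y) * (v {y} - complex_of_real (lam_pow lam y / CC lam A) * sv lam A v)"
          by (simp only: W3[OF y])
        also have "\<dots> = complex_of_real (lam_pow lam y) * v {y} - complex_of_real (lam_pow lam y * lam_pow lam y / CC lam A) * sv lam A v"
          by (simp add: algebra_simps)
        finally show "complex_of_real (lam_pow lam y) * w v {y} = complex_of_real (lam_pow lam y) * v {y} - complex_of_real (lam_pow lam y * lam_pow lam y / CC lam A) * sv lam A v" .
      qed
      also have "\<dots> = complex_of_real (CC lam (D \<inter> B)) * alpha v + ?sR
          - complex_of_real (CC lam R / CC lam A) * sv lam A v"
        unfolding CC_eq_sum by (simp add: sum_distrib_right sum_subtractf sum_divide_distrib)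
      also have "\<dots> = - complex_of_real (CC lam a) * alpha v"
      proof -
        have cb: "complex_of_real (CC lam B) \<noteq> 0" "complex_of_real (CC lam A) \<noteq> 0"
          using CB_pos CA_pos by auto
        have e1: "CC lam (D \<inter> B) = CC lam B - CC lam a" using CB_split by simp
        have e2: "CC lam R = CC lam A - CC lam B" using CA_split by simp
        show ?thesis unfolding alpha_def e1 e2 sA using cb
          by (simp add: field_simps)
      qed
      finally have "(\<Sum>y\<in>D. complex_of_real (lam_pow lam y) * w v {y}) = - complex_of_real (CC lam a) * alpha v" .
      then show ?thesis using lhs 1 kk0 hhS by (simp add: field_simps)
    next
      case (2 z)
      note Uz = this
      then have z: "z \<in> a" "z \<in> B" "z \<notin> D" using aB by auto
      have Sxz: "S = {z, x}" using SUX Xx Uz by auto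
      have kkS: "kk S = lam_pow lam z * lam_pow lam x" unfolding kk_def using Xx Uz x z by simp
      have zx: "z \<noteq> x" using z x by auto
      have hhS: "hh S = 0"
      proof -
        have "card S = 2" using Sxz zx by simp
        then show ?thesis unfolding hh_def using psi_card[of S] by simp
      qed
      have "(\<Sum>y\<in>D. complex_of_real (lam_pow lam y) * w v (insert y ?U))
          = (\<Sum>y\<in>R. complex_of_real (lam_pow lam y) * w v (insert y ?U))"
      proof (rule sum.mono_neutral_right[OF finD RD], rule ballI)
        fix y assume y: "y \<in> D - R"
        then have "y \<in> B" "y \<noteq> z" using z by auto
        then have "insert y ?U \<inter> B = {y, z}" using Uz z by auto
        moreover have "insert y ?U \<subseteq> A" using y Uz z BA by auto
        ultimately have "w v (insert y ?U) = 0" using W1 \<open>y \<noteq> z\<close> by simp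
        then show "complex_of_real (lam_pow lam y) * w v (insert y ?U) = 0" by simp
      qed
      also have "\<dots> = (\<Sum>y\<in>R. complex_of_real (lam_pow lam y) * (complex_of_real (lam_pow lam z / CC lam B)
            * (\<Sum>u\<in>B. complex_of_real (lam_pow lam u) * v (insert u {y}))))"
        using W4 z Uz by (intro sum.cong refl) simp
      also have "\<dots> = complex_of_real (lam_pow lam z / CC lam B) *
           (\<Sum>y\<in>R. \<Sum>u\<in>B. complex_of_real (lam_pow lam y * lam_pow lam u) * v (insert u {y}))"
        by (simp add: sum_distrib_left algebra_simps)
      finally show ?thesis using lhs kkS hhS unfolding beta_def by (simp add: field_simps)
    next
      case 3
      have "\<And>y. y \<in> D \<Longrightarrow> w v (insert y ?U) = 0"
      proof -
        fix y assume y: "y \<in> D"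
        have "?U \<subseteq> insert y ?U \<inter> B" using aB by auto
        moreover have "finite (insert y ?U \<inter> B)" using fX by simp
        ultimately have "card ?U \<le> card (insert y ?U \<inter> B)" by (rule card_mono[rotated])
        moreover have "insert y ?U \<subseteq> A" using y SA by auto
        ultimately show "w v (insert y ?U) = 0" using W1 3 by simp
      qed
      then have "opG lam D (w v) S = 0" using lhs by simp
      moreover have "card S \<ge> 2" using cardS 3 by simp
      then have c1: "card S \<noteq> 1" "card ?U \<noteq> 1" using 3 by simp_all
      then have "psi lam a S = 0" "psi lam D S = 0" "psi lam a ?U = 0" using psi_card[OF c1(1)] psi_card[OF c1(2)] by blast+
      ultimately show ?thesis unfolding hh_def kk_def by simp
    qed
  next
    case 3
    then have lhs: "opG lam D (w v) S = 0" using opG_card2[OF fS] by simp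
    have "card S \<ge> 2" using cardS 3 by simp
    then have c1: "card S \<noteq> 1" "card ?X \<noteq> 1" using 3 by simp_all
    then have "psi lam a S = 0" "psi lam D S = 0" "psi lam D ?X = 0" using psi_card[OF c1(1)] psi_card[OF c1(2)] by blast+
    then show ?thesis using lhs unfolding hh_def kk_def by simp
  qed
qed

end

lemma bessel2:
  fixes f g q :: "'x \<Rightarrow> real"
  assumes orth: "(\<Sum>i\<in>I. g i * q i) = 0" and G: "(\<Sum>i\<in>I. (g i)\<^sup>2) > 0" and Q: "(\<Sum>i\<in>I. (q i)\<^sup>2) > 0"
  shows "(\<Sum>i\<in>I. g i * f i)\<^sup>2 / (\<Sum>i\<in>I. (g i)\<^sup>2) + (\<Sum>i\<in>I. q i * f i)\<^sup>2 / (\<Sum>i\<in>I. (q i)\<^sup>2)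
         \<le> (\<Sum>i\<in>I. (f i)\<^sup>2)"
proof -
  define NG where "NG = (\<Sum>i\<in>I. (g i)\<^sup>2)"
  define NQ where "NQ = (\<Sum>i\<in>I. (q i)\<^sup>2)"
  define x where "x = (\<Sum>i\<in>I. g i * f i)"
  define y where "y = (\<Sum>i\<in>I. q i * f i)"
  define a where "a = x / NG"
  define b where "b = y / NQ"
  have pt: "\<And>i. (f i - a * g i - b * q i)\<^sup>2 = (f i)\<^sup>2 - 2 * a * (g i * f i) - 2 * b * (q i * f i)
      + a\<^sup>2 * (g i)\<^sup>2 + b\<^sup>2 * (q i)\<^sup>2 + 2 * a * b * (g i * q i)"
    by (simp add: power2_eq_square algebra_simps)
  have "0 \<le> (\<Sum>i\<in>I. (f i - a * g i - b * q i)\<^sup>2)" by (intro sum_nonneg) simp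
  also have "\<dots> = (\<Sum>i\<in>I. (f i)\<^sup>2) - 2 * a * x - 2 * b * y + a\<^sup>2 * NG + b\<^sup>2 * NQ + 2 * a * b * 0"
    unfolding pt x_def y_def NG_def NQ_def orth[symmetric]
    by (simp add: sum.distrib sum_subtractf sum_distrib_left)
  also have "\<dots> = (\<Sum>i\<in>I. (f i)\<^sup>2) - x\<^sup>2 / NG - y\<^sup>2 / NQ"
    using G Q unfolding a_def b_def NG_def[symmetric] NQ_def[symmetric]
    by (simp add: field_simps power2_eq_square)
  finally show ?thesis unfolding x_def[symmetric] y_def[symmetric] NG_def[symmetric] NQ_def[symmetric] by simp
qed


lemma norm_comb:
  fixes h k :: "'x \<Rightarrow> real" and \<alpha> \<beta> :: complex
  assumes hk: "(\<Sum>i\<in>I. h i * k i) = 0"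
  shows "(\<Sum>i\<in>I. (cmod (\<alpha> * complex_of_real (h i) + \<beta> * complex_of_real (k i)))\<^sup>2)
       = (cmod \<alpha>)\<^sup>2 * (\<Sum>i\<in>I. (h i)\<^sup>2) + (cmod \<beta>)\<^sup>2 * (\<Sum>i\<in>I. (k i)\<^sup>2)"
proof -
  have pt: "\<And>i. (cmod (\<alpha> * complex_of_real (h i) + \<beta> * complex_of_real (k i)))\<^sup>2
     = (cmod \<alpha>)\<^sup>2 * (h i)\<^sup>2 + (cmod \<beta>)\<^sup>2 * (k i)\<^sup>2 + 2 * (Re \<alpha> * Re \<beta> + Im \<alpha> * Im \<beta>) * (h i * k i)"
    unfolding cmod_power2 by (simp add: power2_eq_square algebra_simps)
  have "(\<Sum>i\<in>I. (cmod (\<alpha> * complex_of_real (h i) + \<beta> * complex_of_real (k i)))\<^sup>2)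
     = (cmod \<alpha>)\<^sup>2 * (\<Sum>i\<in>I. (h i)\<^sup>2) + (cmod \<beta>)\<^sup>2 * (\<Sum>i\<in>I. (k i)\<^sup>2)
       + 2 * (Re \<alpha> * Re \<beta> + Im \<alpha> * Im \<beta>) * (\<Sum>i\<in>I. h i * k i)"
    unfolding pt by (simp add: sum.distrib sum_distrib_left)
  then show ?thesis using hk by simp
qed

lemma bessel_c:
  fixes g q :: "'x \<Rightarrow> real" and v :: "'x \<Rightarrow> complex"
  assumes orth: "(\<Sum>i\<in>I. g i * q i) = 0" and G: "(\<Sum>i\<in>I. (g i)\<^sup>2) > 0" and Q: "(\<Sum>i\<in>I. (q i)\<^sup>2) > 0"
  shows "(cmod (\<Sum>i\<in>I. complex_of_real (g i) * v i))\<^sup>2 / (\<Sum>i\<in>I. (g i)\<^sup>2)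
       + (cmod (\<Sum>i\<in>I. complex_of_real (q i) * v i))\<^sup>2 / (\<Sum>i\<in>I. (q i)\<^sup>2)
       \<le> (\<Sum>i\<in>I. (cmod (v i))\<^sup>2)"
proof -
  have r: "(\<Sum>i\<in>I. g i * Re (v i))\<^sup>2 / (\<Sum>i\<in>I. (g i)\<^sup>2) + (\<Sum>i\<in>I. q i * Re (v i))\<^sup>2 / (\<Sum>i\<in>I. (q i)\<^sup>2)
         \<le> (\<Sum>i\<in>I. (Re (v i))\<^sup>2)" by (rule bessel2[OF orth G Q])
  have m: "(\<Sum>i\<in>I. g i * Im (v i))\<^sup>2 / (\<Sum>i\<in>I. (g i)\<^sup>2) + (\<Sum>i\<in>I. q i * Im (v i))\<^sup>2 / (\<Sum>i\<in>I. (q i)\<^sup>2)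
         \<le> (\<Sum>i\<in>I. (Im (v i))\<^sup>2)" by (rule bessel2[OF orth G Q])
  have e1: "(cmod (\<Sum>i\<in>I. complex_of_real (g i) * v i))\<^sup>2 = (\<Sum>i\<in>I. g i * Re (v i))\<^sup>2 + (\<Sum>i\<in>I. g i * Im (v i))\<^sup>2"
    by (simp add: cmod_power2)
  have e2: "(cmod (\<Sum>i\<in>I. complex_of_real (q i) * v i))\<^sup>2 = (\<Sum>i\<in>I. q i * Re (v i))\<^sup>2 + (\<Sum>i\<in>I. q i * Im (v i))\<^sup>2"
    by (simp add: cmod_power2)
  have e3: "(\<Sum>i\<in>I. (cmod (v i))\<^sup>2) = (\<Sum>i\<in>I. (Re (v i))\<^sup>2) + (\<Sum>i\<in>I. (Im (v i))\<^sup>2)"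
    by (simp add: cmod_power2 sum.distrib)
  show ?thesis unfolding e1 e2 e3 using r m by (simp add: add_divide_distrib)
qed

lemma opnorm_rank2:
  fixes M :: "'d mat" and g h q k :: "'d site set \<Rightarrow> real" and L :: "'d site set"
  assumes act: "\<And>v S. S \<in> Pow L \<Longrightarrow> mv L M v S = (\<Sum>T\<in>Pow L. complex_of_real (g T) * v T) * complex_of_real (h S)
                      + (\<Sum>T\<in>Pow L. complex_of_real (q T) * v T) * complex_of_real (k S)"
    and hk: "(\<Sum>S\<in>Pow L. h S * k S) = 0" and gq: "(\<Sum>S\<in>Pow L. g S * q S) = 0"
    and G: "(\<Sum>S\<in>Pow L. (g S)\<^sup>2) > 0" and Q: "(\<Sum>S\<in>Pow L. (q S)\<^sup>2) > 0"
    and c1: "(\<Sum>S\<in>Pow L. (h S)\<^sup>2) * (\<Sum>S\<in>Pow L. (g S)\<^sup>2) = c"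
    and c2: "(\<Sum>S\<in>Pow L. (k S)\<^sup>2) * (\<Sum>S\<in>Pow L. (q S)\<^sup>2) = c"
  shows "opnorm L M = sqrt c"
proof -
  define NG where "NG = (\<Sum>S\<in>Pow L. (g S)\<^sup>2)"
  define NQ where "NQ = (\<Sum>S\<in>Pow L. (q S)\<^sup>2)"
  define NH where "NH = (\<Sum>S\<in>Pow L. (h S)\<^sup>2)"
  define NK where "NK = (\<Sum>S\<in>Pow L. (k S)\<^sup>2)"
  have NG: "NG > 0" and NQ: "NQ > 0" using G Q unfolding NG_def NQ_def by auto
  have c0: "c \<ge> 0" using c1[symmetric] by (simp add: sum_nonneg)
  have NHc: "NH = c / NG" using c1 NG unfolding NH_def NG_def by (simp add: field_simps)
  have NKc: "NK = c / NQ" using c2 NQ unfolding NK_def NQ_def by (simp add: field_simps)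
  have sq: "\<And>v. (\<Sum>S\<in>Pow L. (cmod (mv L M v S))\<^sup>2)
      = (cmod (\<Sum>T\<in>Pow L. complex_of_real (g T) * v T))\<^sup>2 * NH + (cmod (\<Sum>T\<in>Pow L. complex_of_real (q T) * v T))\<^sup>2 * NK"
  proof -
    fix v
    have "(\<Sum>S\<in>Pow L. (cmod (mv L M v S))\<^sup>2) = (\<Sum>S\<in>Pow L. (cmod ((\<Sum>T\<in>Pow L. complex_of_real (g T) * v T) * complex_of_real (h S)
                      + (\<Sum>T\<in>Pow L. complex_of_real (q T) * v T) * complex_of_real (k S)))\<^sup>2)"
      using act by (intro sum.cong refl) simp
    also have "\<dots> = (cmod (\<Sum>T\<in>Pow L. complex_of_real (g T) * v T))\<^sup>2 * NH + (cmod (\<Sum>T\<in>Pow L. complex_of_real (q T) * v T))\<^sup>2 * NK"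
      unfolding NH_def NK_def by (rule norm_comb[OF hk])
    finally show "?thesis v" .
  qed
  have ub: "\<And>v. vnorm L v \<le> 1 \<Longrightarrow> vnorm L (mv L M v) \<le> sqrt c"
  proof -
    fix v assume v1: "vnorm L v \<le> 1"
    let ?N = "(\<Sum>T\<in>Pow L. (cmod (v T))\<^sup>2)"
    have N0: "?N \<ge> 0" by (simp add: sum_nonneg)
    have N1: "?N \<le> 1" using v1 N0 unfolding vnorm_def by simp
    have b: "(cmod (\<Sum>T\<in>Pow L. complex_of_real (g T) * v T))\<^sup>2 / NG + (cmod (\<Sum>T\<in>Pow L. complex_of_real (q T) * v T))\<^sup>2 / NQ \<le> ?N"
      unfolding NG_def NQ_def by (rule bessel_c[OF gq G Q])
    have "(\<Sum>S\<in>Pow L. (cmod (mv L M v S))\<^sup>2)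
       = c * ((cmod (\<Sum>T\<in>Pow L. complex_of_real (g T) * v T))\<^sup>2 / NG + (cmod (\<Sum>T\<in>Pow L. complex_of_real (q T) * v T))\<^sup>2 / NQ)"
      unfolding sq NHc NKc by (simp add: field_simps)
    also have "\<dots> \<le> c * ?N" by (rule mult_left_mono[OF b c0])
    also have "\<dots> \<le> c" using N1 c0 by (simp add: mult_left_le)
    finally show "vnorm L (mv L M v) \<le> sqrt c" unfolding vnorm_def by simp
  qed
  define v0 where "v0 = (\<lambda>T. complex_of_real (q T / sqrt NQ))"
  have sNQ: "sqrt NQ > 0" using NQ by simp
  have "vnorm L v0 = sqrt (\<Sum>T\<in>Pow L. (q T)\<^sup>2 / NQ)"
    unfolding vnorm_def v0_def
  proof (intro arg_cong[where f=sqrt] sum.cong refl)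
    fix T
    have "(cmod (complex_of_real (q T / sqrt NQ)))\<^sup>2 = (q T / sqrt NQ)\<^sup>2"
      by (simp only: norm_of_real power2_abs)
    also have "\<dots> = (q T)\<^sup>2 / NQ" using NQ by (simp add: power_divide)
    finally show "(cmod (complex_of_real (q T / sqrt NQ)))\<^sup>2 = (q T)\<^sup>2 / NQ" .
  qed
  also have "\<dots> = 1" using NQ unfolding NQ_def by (simp add: sum_divide_distrib[symmetric])
  finally have v01: "vnorm L v0 = 1" .
  have a0: "(\<Sum>T\<in>Pow L. complex_of_real (g T) * v0 T) = 0"
  proof -
    have "(\<Sum>T\<in>Pow L. complex_of_real (g T) * v0 T) = complex_of_real ((\<Sum>T\<in>Pow L. g T * q T) / sqrt NQ)"
      unfolding v0_def by (simp add: sum_divide_distrib)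
    then show ?thesis using gq by simp
  qed
  have b0: "(\<Sum>T\<in>Pow L. complex_of_real (q T) * v0 T) = complex_of_real (sqrt NQ)"
  proof -
    have "(\<Sum>T\<in>Pow L. complex_of_real (q T) * v0 T) = complex_of_real ((\<Sum>T\<in>Pow L. (q T)\<^sup>2) / sqrt NQ)"
      unfolding v0_def by (simp add: sum_divide_distrib power2_eq_square)
    also have "\<dots> = complex_of_real (sqrt NQ)" unfolding NQ_def[symmetric] using NQ
      by (simp add: real_div_sqrt less_imp_le)
    finally show ?thesis .
  qed
  have "vnorm L (mv L M v0) = sqrt (NQ * NK)"
    unfolding vnorm_def sq a0 b0 using NQ by simp
  also have "\<dots> = sqrt c" using NKc NQ by simp
  finally have att: "vnorm L (mv L M v0) = sqrt c" .
  show ?thesis unfolding opnorm_def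
  proof (rule cSup_eq_maximum)
    show "sqrt c \<in> {vnorm L (mv L M v) |v. vnorm L v \<le> 1}" proof -
      have "vnorm L v0 \<le> 1" using v01 by simp
      then show ?thesis using att[symmetric] by blast
    qed
  next
    fix x assume "x \<in> {vnorm L (mv L M v) |v. vnorm L v \<le> 1}"
    then show "x \<le> sqrt c" using ub by blast
  qed
qed

lemma psi_psi:
  assumes "finite A" "X \<subseteq> A"
  shows "(\<Sum>S\<in>Pow A. psi lam X S * psi lam Y S) = CC lam (X \<inter> Y)"
proof -
  have fX: "finite X" using assms finite_subset by blast
  have "(\<Sum>S\<in>Pow A. psi lam X S * psi lam Y S) = (\<Sum>x\<in>X. lam_pow lam x * psi lam Y {x})"
    using sum_psi[OF assms, of lam "psi lam Y"] by simp
  also have "\<dots> = (\<Sum>x\<in>X. if x \<in> Y then lam_pow lam x * lam_pow lam x else 0)"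
    by (intro sum.cong refl) simp
  also have "\<dots> = (\<Sum>x\<in>X \<inter> Y. lam_pow lam x * lam_pow lam x)"
    by (rule sum.inter_restrict[OF fX, symmetric])
  also have "\<dots> = CC lam (X \<inter> Y)" by (simp add: CC_eq_sum)
  finally show ?thesis .
qed

lemma sum_Pow_prod:
  assumes "finite A" "Q \<subseteq> A"
  shows "(\<Sum>T\<in>Pow A. F1 (T \<inter> (A - Q)) * F2 (T \<inter> Q)) = (\<Sum>U\<in>Pow (A - Q). F1 U) * (\<Sum>V\<in>Pow Q. (F2 V :: 'b::comm_semiring_1))"
proof -
  have "(\<Sum>T\<in>Pow A. F1 (T \<inter> (A - Q)) * F2 (T \<inter> Q))
      = (\<Sum>U\<in>Pow (A - Q). \<Sum>V\<in>Pow Q. F1 ((U \<union> V) \<inter> (A - Q)) * F2 ((U \<union> V) \<inter> Q))"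
    by (rule sum_Pow_split[OF assms])
  also have "\<dots> = (\<Sum>U\<in>Pow (A - Q). \<Sum>V\<in>Pow Q. F1 U * F2 V)"
  proof (intro sum.cong refl)
    fix U V assume "U \<in> Pow (A - Q)" "V \<in> Pow Q"
    then have "(U \<union> V) \<inter> (A - Q) = U" "(U \<union> V) \<inter> Q = V" by auto
    then show "F1 ((U \<union> V) \<inter> (A - Q)) * F2 ((U \<union> V) \<inter> Q) = F1 U * F2 V" by simp
  qed
  also have "\<dots> = (\<Sum>U\<in>Pow (A - Q). F1 U) * (\<Sum>V\<in>Pow Q. F2 V)"
    by (simp add: sum_product)
  finally show ?thesis .
qed

lemma psi_sq: "finite A \<Longrightarrow> (\<Sum>S\<in>Pow A. (psi lam A S)\<^sup>2) = CC lam A"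
  using psi_psi[of A A lam A] by (simp add: power2_eq_square)

context Mset begin

definition gg :: "'d site set \<Rightarrow> real" where
  "gg T = psi lam B T / CC lam B - psi lam A T / CC lam A"

definition qq :: "'d site set \<Rightarrow> real" where
  "qq T = psi lam B (T \<inter> B) * psi lam R (T \<inter> R) / (CC lam D * CC lam B)"

lemma AR: "A - R = B" using BA by blast
lemma AD: "A - D = a" using aB BA by blast

lemma card_split:
  assumes "T \<subseteq> A" "X \<subseteq> A"
  shows "card T = card (T \<inter> (A - X)) + card (T \<inter> X)"
proof -
  have "finite T" using assms finA finite_subset by blast
  moreover have "T = (T \<inter> (A - X)) \<union> (T \<inter> X)" using assms by blast
  ultimately show ?thesis by (metis Diff_disjoint card_Un_disjoint finite_Int inf_assoc inf_bot_right inf_commute)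
qed

lemma alpha_sum: "alpha v = (\<Sum>T\<in>Pow A. complex_of_real (gg T) * v T)"
proof -
  have sB: "sv lam B v = (\<Sum>T\<in>Pow A. complex_of_real (psi lam B T) * v T)"
    unfolding sv_def by (rule sum_psi[OF finA BA, symmetric])
  have sA: "sv lam A v = (\<Sum>T\<in>Pow A. complex_of_real (psi lam A T) * v T)"
    unfolding sv_def by (rule sum_psi[OF finA subset_refl, symmetric])
  show ?thesis unfolding alpha_def sB sA gg_def
    by (simp add: sum_divide_distrib sum_subtractf algebra_simps)
qed

lemma beta_sum: "beta v = (\<Sum>T\<in>Pow A. complex_of_real (qq T) * v T)"
proof -
  have "(\<Sum>T\<in>Pow A. complex_of_real (psi lam B (T \<inter> B) * psi lam R (T \<inter> R)) * v T)
      = (\<Sum>U\<in>Pow (A - R). \<Sum>V\<in>Pow R. complex_of_real (psi lam B ((U \<union> V) \<inter> B) * psi lam R ((U \<union> V) \<inter> R)) * v (U \<union> V))"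
    by (rule sum_Pow_split[OF finA]) simp
  also have "\<dots> = (\<Sum>U\<in>Pow B. complex_of_real (psi lam B U) * (\<Sum>V\<in>Pow R. complex_of_real (psi lam R V) * v (U \<union> V)))"
    unfolding AR sum_distrib_left
  proof (intro sum.cong refl)
    fix U V assume "U \<in> Pow B" "V \<in> Pow R"
    then have "(U \<union> V) \<inter> B = U" "(U \<union> V) \<inter> R = V" by auto
    then show "complex_of_real (psi lam B ((U \<union> V) \<inter> B) * psi lam R ((U \<union> V) \<inter> R)) * v (U \<union> V)
        = complex_of_real (psi lam B U) * (complex_of_real (psi lam R V) * v (U \<union> V))" by simp
  qed
  also have "\<dots> = (\<Sum>U\<in>Pow B. complex_of_real (psi lam B U) * (\<Sum>y\<in>R. complex_of_real (lam_pow lam y) * v (U \<union> {y})))"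
    by (intro sum.cong refl arg_cong2[where f="(*)"] sum_psi[OF finR]) simp_all
  also have "\<dots> = (\<Sum>u\<in>B. complex_of_real (lam_pow lam u) * (\<Sum>y\<in>R. complex_of_real (lam_pow lam y) * v ({u} \<union> {y})))"
    by (rule sum_psi[OF finB]) simp
  also have "\<dots> = (\<Sum>y\<in>R. \<Sum>u\<in>B. complex_of_real (lam_pow lam y * lam_pow lam u) * v (insert u {y}))"
    by (subst sum.swap) (simp add: sum_distrib_left algebra_simps insert_commute)
  finally have e: "(\<Sum>T\<in>Pow A. complex_of_real (psi lam B (T \<inter> B) * psi lam R (T \<inter> R)) * v T)
      = (\<Sum>y\<in>R. \<Sum>u\<in>B. complex_of_real (lam_pow lam y * lam_pow lam u) * v (insert u {y}))" .
  show ?thesis unfolding beta_def qq_def e[symmetric]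
    by (simp add: sum_divide_distrib algebra_simps)
qed

end

context Mset begin

lemma hk_orth: "(\<Sum>S\<in>Pow A. hh S * kk S) = 0"
proof (rule sum.neutral, rule ballI)
  fix S assume S: "S \<in> Pow A"
  show "hh S * kk S = 0"
  proof (cases "kk S = 0")
    case False
    then have "psi lam a (S \<inter> a) \<noteq> 0" "psi lam D (S \<inter> D) \<noteq> 0" unfolding kk_def by auto
    then have "card (S \<inter> a) = 1" "card (S \<inter> D) = 1" using psi_card by metis+
    moreover have "card S = card (S \<inter> (A - D)) + card (S \<inter> D)" using S by (intro card_split) auto
    ultimately have c: "card S \<noteq> 1" unfolding AD by simp
    have "psi lam a S = 0" "psi lam D S = 0" by (rule psi_card[OF c])+
    then have "hh S = 0" unfolding hh_def by simp
    then show ?thesis by simp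
  qed simp
qed

lemma gq_orth: "(\<Sum>S\<in>Pow A. gg S * qq S) = 0"
proof (rule sum.neutral, rule ballI)
  fix S assume S: "S \<in> Pow A"
  show "gg S * qq S = 0"
  proof (cases "qq S = 0")
    case False
    then have "psi lam B (S \<inter> B) \<noteq> 0" "psi lam R (S \<inter> R) \<noteq> 0" unfolding qq_def by auto
    then have "card (S \<inter> B) = 1" "card (S \<inter> R) = 1" using psi_card by metis+
    moreover have "card S = card (S \<inter> (A - R)) + card (S \<inter> R)" using S by (intro card_split) auto
    ultimately have c: "card S \<noteq> 1" unfolding AR by simp
    have "psi lam B S = 0" "psi lam A S = 0" by (rule psi_card[OF c])+
    then have "gg S = 0" unfolding gg_def by simp
    then show ?thesis by simp
  qed simp
qed

lemma NG: "(\<Sum>S\<in>Pow A. (gg S)\<^sup>2) = 1 / CC lam B - 1 / CC lam A"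
proof -
  have pt: "\<And>S. (gg S)\<^sup>2 = psi lam B S * psi lam B S / (CC lam B)\<^sup>2
      - 2 * (psi lam B S * psi lam A S) / (CC lam B * CC lam A) + psi lam A S * psi lam A S / (CC lam A)\<^sup>2"
    unfolding gg_def using CB_pos CA_pos by (simp add: power2_eq_square field_simps)
  have e1: "(\<Sum>S\<in>Pow A. psi lam B S * psi lam B S) = CC lam B" using psi_psi[OF finA BA, of lam B] by simp
  have e2: "(\<Sum>S\<in>Pow A. psi lam B S * psi lam A S) = CC lam B"
    using psi_psi[OF finA BA, of lam A] BA by (simp add: Int_absorb2)
  have e3: "(\<Sum>S\<in>Pow A. psi lam A S * psi lam A S) = CC lam A" using psi_psi[OF finA subset_refl, of lam A] by simp
  have "(\<Sum>S\<in>Pow A. (gg S)\<^sup>2) = CC lam B / (CC lam B)\<^sup>2 - 2 * CC lam B / (CC lam B * CC lam A) + CC lam A / (CC lam A)\<^sup>2"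
    unfolding pt by (simp add: sum_subtractf sum.distrib sum_divide_distrib[symmetric] sum_distrib_left[symmetric] e1 e2 e3)
  also have "\<dots> = 1 / CC lam B - 1 / CC lam A"
    using CB_pos CA_pos by (simp add: field_simps power2_eq_square)
  finally show ?thesis .
qed

lemma NH: "(\<Sum>S\<in>Pow A. (hh S)\<^sup>2) = CC lam a + (CC lam a)\<^sup>2 / CC lam D"
proof -
  define r where "r = CC lam a / CC lam D"
  have pt: "\<And>S. (hh S)\<^sup>2 = psi lam a S * psi lam a S - 2 * r * (psi lam a S * psi lam D S) + r\<^sup>2 * (psi lam D S * psi lam D S)"
    unfolding hh_def r_def using CD_pos by (simp add: power2_eq_square field_simps)
  have aA: "a \<subseteq> A" using aB BA by blast
  have e1: "(\<Sum>S\<in>Pow A. psi lam a S * psi lam a S) = CC lam a" using psi_psi[OF finA aA, of lam a] by simp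
  have e2: "(\<Sum>S\<in>Pow A. psi lam a S * psi lam D S) = 0"
  proof -
    have "a \<inter> D = {}" by blast
    then show ?thesis using psi_psi[OF finA aA, of lam D] by (simp add: CC_def)
  qed
  have e3: "(\<Sum>S\<in>Pow A. psi lam D S * psi lam D S) = CC lam D" using psi_psi[OF finA, of D lam D] by auto
  have "(\<Sum>S\<in>Pow A. (hh S)\<^sup>2) = CC lam a - 2 * r * 0 + r\<^sup>2 * CC lam D"
    unfolding pt by (simp add: sum_subtractf sum.distrib sum_distrib_left[symmetric] e1 e2 e3)
  also have "\<dots> = CC lam a + (CC lam a)\<^sup>2 / CC lam D"
    using CD_pos unfolding r_def by (simp add: field_simps power2_eq_square)
  finally show ?thesis .
qed

lemma NK: "(\<Sum>S\<in>Pow A. (kk S)\<^sup>2) = CC lam a * CC lam D"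
proof -
  have "(\<Sum>S\<in>Pow A. (kk S)\<^sup>2) = (\<Sum>S\<in>Pow A. (psi lam a (S \<inter> (A - D)))\<^sup>2 * (psi lam D (S \<inter> D))\<^sup>2)"
    unfolding kk_def AD by (simp add: power_mult_distrib)
  also have "\<dots> = (\<Sum>U\<in>Pow (A - D). (psi lam a U)\<^sup>2) * (\<Sum>V\<in>Pow D. (psi lam D V)\<^sup>2)"
    by (rule sum_Pow_prod[OF finA]) simp
  also have "\<dots> = CC lam a * CC lam D" unfolding AD using psi_sq[OF fina] psi_sq[OF finD] by simp
  finally show ?thesis .
qed

lemma NQ: "(\<Sum>S\<in>Pow A. (qq S)\<^sup>2) = CC lam B * CC lam R / (CC lam D * CC lam B)\<^sup>2"
proof -
  have "(\<Sum>S\<in>Pow A. (qq S)\<^sup>2) = (\<Sum>S\<in>Pow A. (psi lam B (S \<inter> (A - R)))\<^sup>2 * (psi lam R (S \<inter> R))\<^sup>2) / (CC lam D * CC lam B)\<^sup>2"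
    unfolding qq_def AR by (simp add: power_mult_distrib power_divide sum_divide_distrib)
  also have "(\<Sum>S\<in>Pow A. (psi lam B (S \<inter> (A - R)))\<^sup>2 * (psi lam R (S \<inter> R))\<^sup>2)
      = (\<Sum>U\<in>Pow (A - R). (psi lam B U)\<^sup>2) * (\<Sum>V\<in>Pow R. (psi lam R V)\<^sup>2)"
    by (rule sum_Pow_prod[OF finA]) simp
  also have "\<dots> = CC lam B * CC lam R" unfolding AR using psi_sq[OF finB] psi_sq[OF finR] by simp
  finally show ?thesis .
qed

definition cval :: real where
  "cval = CC lam a * CC lam R / (CC lam D * CC lam B)"

lemma c1: "(\<Sum>S\<in>Pow A. (hh S)\<^sup>2) * (\<Sum>S\<in>Pow A. (gg S)\<^sup>2) = cval"
proof -
  have "(CC lam a + (CC lam a)\<^sup>2 / CC lam D) * (1 / CC lam B - 1 / CC lam A)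
      = CC lam a * (CC lam D + CC lam a) / CC lam D * ((CC lam A - CC lam B) / (CC lam B * CC lam A))"
    using CD_pos CB_pos CA_pos by (simp add: field_simps power2_eq_square)
  also have "\<dots> = cval"
  proof -
    have e1: "CC lam D + CC lam a = CC lam A" using CA_split2 by simp
    have e2: "CC lam A - CC lam B = CC lam R" using CA_split by simp
    show ?thesis unfolding e1 e2 cval_def using CD_pos CB_pos CA_pos by (simp add: field_simps)
  qed
  finally show ?thesis unfolding NH NG .
qed

lemma c2: "(\<Sum>S\<in>Pow A. (kk S)\<^sup>2) * (\<Sum>S\<in>Pow A. (qq S)\<^sup>2) = cval"
  unfolding NK NQ cval_def using CD_pos CB_pos by (simp add: field_simps power2_eq_square)

lemma NG_pos: "(\<Sum>S\<in>Pow A. (gg S)\<^sup>2) > 0"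
proof -
  have "1 / CC lam B - 1 / CC lam A = CC lam R / (CC lam B * CC lam A)"
    using CB_pos CA_pos CA_split by (simp add: field_simps)
  then show ?thesis unfolding NG using CB_pos CA_pos CR_pos by simp
qed

lemma NQ_pos: "(\<Sum>S\<in>Pow A. (qq S)\<^sup>2) > 0"
  unfolding NQ using CB_pos CR_pos CD_pos by simp

end

context Mset begin

lemma M_action:
  assumes connA: "nn_connected A" and connB: "nn_connected B" and connD: "nn_connected D"
    and S: "S \<in> Pow A"
  shows "mv A (mmul A (Gext lam D A) (\<lambda>S T. Gext lam B A S T - Gext lam A A S T)) v S
       = (\<Sum>T\<in>Pow A. complex_of_real (gg T) * v T) * complex_of_real (hh S)
         + (\<Sum>T\<in>Pow A. complex_of_real (qq T) * v T) * complex_of_real (kk S)"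
proof -
  let ?Y = "\<lambda>S T. Gext lam B A S T - Gext lam A A S T"
  have DA: "D \<subseteq> A" by blast
  have Y: "\<And>T. T \<subseteq> A \<Longrightarrow> mv A ?Y v T = w v T"
  proof -
    fix T assume T: "T \<subseteq> A"
    have "mv A ?Y v T = mv A (Gext lam B A) v T - mv A (Gext lam A A) v T"
      unfolding mv_def by (simp add: left_diff_distrib sum_subtractf)
    also have "\<dots> = opG lam B v T - opG lam A v T"
      using mv_Gext[OF finA BA lp connB T] mv_Gext[OF finA subset_refl lp connA T] by simp
    finally show "mv A ?Y v T = w v T" unfolding w_def .
  qed
  have "mv A (mmul A (Gext lam D A) ?Y) v S = mv A (Gext lam D A) (mv A ?Y v) S"
    by (rule mv_mmul[OF finA])
  also have "\<dots> = opG lam D (mv A ?Y v) S"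
    using S by (intro mv_Gext[OF finA DA lp connD]) auto
  also have "\<dots> = opG lam D (w v) S"
    using S by (intro opG_cong[OF Y]) auto
  also have "\<dots> = alpha v * complex_of_real (hh S) + beta v * complex_of_real (kk S)"
    using S by (intro main_formula) auto
  finally show ?thesis unfolding alpha_sum beta_sum .
qed

lemma opnorm_M:
  assumes connA: "nn_connected A" and connB: "nn_connected B" and connD: "nn_connected D"
  shows "opnorm A (mmul A (Gext lam D A) (\<lambda>S T. Gext lam B A S T - Gext lam A A S T)) = sqrt cval"
  by (rule opnorm_rank2[OF M_action[OF assms] hk_orth gq_orth NG_pos NQ_pos c1 c2])

lemma cval_nonneg: "cval \<ge> 0"
  unfolding cval_def using CC_nonneg[of lam a] CD_pos CB_pos CR_pos by simp

end

lemma Lam_mono: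
  assumes incr: "\<forall>k\<ge>1. Lam k \<subset> Lam (Suc k)" and ij: "1 \<le> i" "i \<le> j"
  shows "Lam i \<subseteq> Lam j"
  using ij(2)
proof (induction j rule: dec_induct)
  case base then show ?case by simp
next
  case (step m)
  then have "Lam m \<subset> Lam (Suc m)" using incr ij(1) by simp
  then show ?case using step.IH by blast
qed

theorem lemma3p3:
  fixes lam :: "real ^ 'd::finite"
    and Lam :: "nat \<Rightarrow> 'd site set"
    and l n :: nat
  assumes lam_pos: "\<forall>j. lam $ j > 0"
    and l2: "l \<ge> 2"
    and fin: "\<forall>k\<ge>1. finite (Lam k)"
    and incr: "\<forall>k\<ge>1. Lam k \<subset> Lam (Suc k)"
    and conn: "\<forall>k\<ge>1. nn_connected (Lam k)"
    and conn_diff: "\<forall>k>l. nn_connected (Lam k - Lam (k - l))"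
    and n: "n + 1 - l \<ge> 1"
  shows "(opnorm (Lam (n + 1))
            (mmul (Lam (n + 1))
               (Gext lam (Lam (n + 1) - Lam (n + 1 - l)) (Lam (n + 1)))
               (\<lambda>S T. Gext lam (Lam n) (Lam (n + 1)) S T
                      - Gext lam (Lam (n + 1)) (Lam (n + 1)) S T)))\<^sup>2
         = Cw lam (Lam (n + 1 - l)) * Cw lam (Lam (n + 1) - Lam n)
           / (Cw lam (Lam n) * Cw lam (Lam (n + 1) - Lam (n + 1 - l)))"
proof -
  have nl: "n \<ge> l" "n \<ge> 2" "n \<ge> 1" using n l2 by auto
  have le: "n + 1 - l \<le> n" using nl l2 by linarith
  have aB: "Lam (n + 1 - l) \<subseteq> Lam n" by (rule Lam_mono[OF incr n le])
  have BA: "Lam n \<subset> Lam (n + 1)" using incr nl by simp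
  have finA: "finite (Lam (n + 1))" using fin by simp
  have "Lam 1 \<subset> Lam 2" using incr by (metis Suc_1 order_refl)
  moreover have "Lam 2 \<subseteq> Lam n" using Lam_mono[OF incr, of 2 n] nl by simp
  ultimately have Bne: "Lam n \<noteq> {}" by blast
  interpret Mset lam "Lam (n + 1)" "Lam n" "Lam (n + 1 - l)"
    using lam_pos finA aB BA Bne by unfold_locales auto
  have cA: "nn_connected (Lam (n + 1))" and cB: "nn_connected (Lam n)" using conn nl by auto
  have cD: "nn_connected (Lam (n + 1) - Lam (n + 1 - l))" using conn_diff nl by auto
  have "(opnorm (Lam (n + 1))
            (mmul (Lam (n + 1))
               (Gext lam (Lam (n + 1) - Lam (n + 1 - l)) (Lam (n + 1)))
               (\<lambda>S T. Gext lam (Lam n) (Lam (n + 1)) S T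
                      - Gext lam (Lam (n + 1)) (Lam (n + 1)) S T)))\<^sup>2 = cval"
    unfolding opnorm_M[OF cA cB cD] using cval_nonneg by simp
  also have "\<dots> = Cw lam (Lam (n + 1 - l)) * Cw lam (Lam (n + 1) - Lam n)
           / (Cw lam (Lam n) * Cw lam (Lam (n + 1) - Lam (n + 1 - l)))"
    unfolding cval_def Cw_CC[OF lam_pos] by (simp add: mult.commute)
  finally show ?thesis .
qed

end
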